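(* Let $R$ be a local ring (i.e. $R/J(R)$ is a division ring), ${}_RM$ a finitely generated semisimple left $R$-module with $d=\dim_R(M)$, $\varphi:M\to M$ a nilpotent $R$-endomorphism with index of nilpotency $n$ ($\varphi^n=0\ne\varphi^{n-1}$), and $\sigma\in\mathrm{Hom}_R(M,M)$ arbitrary. Then the following are equivalent: (1) $C_\varphi\subseteq C_\sigma$; (2) there exist an $R$-generating set $\{y_j\in M\mid1\le j\le d\}$ of ${}_RM$ and elements $a_1,\dots,a_n\in R$ such that \[a_1\psi(y_j)+a_2\varphi(\psi(y_j))+\cdots+a_n\varphi^{n-1}(\psi(y_j))=\sigma(\psi(y_j))\] for all $1\le j\le d$ and all $\psi\in C_\varphi$.
   Context: For $\alpha\in\mathrm{Hom}_R(M,M)$, $C_\alpha=\{\psi\in\mathrm{Hom}_R(M,M)\mid\psi\circ\alpha=\alpha\circ\psi\}$. $J(R)$ is the Jacobson radical and $\dim_R$ is composition length. *)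

theory Defs
  imports "HOL-Algebra.Algebra"
begin

text \<open>HOL-Algebra's locale module requires a commutative ring, so we define
left modules over an arbitrary ring ourselves, reusing the module record.\<close>

definition left_module :: "('a, 'c) ring_scheme \<Rightarrow> ('a, 'b, 'd) module_scheme \<Rightarrow> bool" where
  "left_module R M \<longleftrightarrow> ring R \<and> abelian_group M \<and>
     (\<forall>a\<in>carrier R. \<forall>x\<in>carrier M. a \<odot>\<^bsub>M\<^esub> x \<in> carrier M) \<and>
     (\<forall>a\<in>carrier R. \<forall>b\<in>carrier R. \<forall>x\<in>carrier M.
        (a \<oplus>\<^bsub>R\<^esub> b) \<odot>\<^bsub>M\<^esub> x = a \<odot>\<^bsub>M\<^esub> x \<oplus>\<^bsub>M\<^esub> b \<odot>\<^bsub>M\<^esub> x) \<and>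
     (\<forall>a\<in>carrier R. \<forall>x\<in>carrier M. \<forall>y\<in>carrier M.
        a \<odot>\<^bsub>M\<^esub> (x \<oplus>\<^bsub>M\<^esub> y) = a \<odot>\<^bsub>M\<^esub> x \<oplus>\<^bsub>M\<^esub> a \<odot>\<^bsub>M\<^esub> y) \<and>
     (\<forall>a\<in>carrier R. \<forall>b\<in>carrier R. \<forall>x\<in>carrier M.
        (a \<otimes>\<^bsub>R\<^esub> b) \<odot>\<^bsub>M\<^esub> x = a \<odot>\<^bsub>M\<^esub> (b \<odot>\<^bsub>M\<^esub> x)) \<and>
     (\<forall>x\<in>carrier M. \<one>\<^bsub>R\<^esub> \<odot>\<^bsub>M\<^esub> x = x)"

definition lsubmodule :: "('a, 'c) ring_scheme \<Rightarrow> ('a, 'b, 'd) module_scheme \<Rightarrow> 'b set \<Rightarrow> bool" where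
  "lsubmodule R M N \<longleftrightarrow> N \<subseteq> carrier M \<and> \<zero>\<^bsub>M\<^esub> \<in> N \<and>
     (\<forall>x\<in>N. \<forall>y\<in>N. x \<oplus>\<^bsub>M\<^esub> y \<in> N) \<and>
     (\<forall>x\<in>N. \<ominus>\<^bsub>M\<^esub> x \<in> N) \<and>
     (\<forall>a\<in>carrier R. \<forall>x\<in>N. a \<odot>\<^bsub>M\<^esub> x \<in> N)"

definition lspan :: "('a, 'c) ring_scheme \<Rightarrow> ('a, 'b, 'd) module_scheme \<Rightarrow> 'b set \<Rightarrow> 'b set" where
  "lspan R M S = \<Inter>{N. lsubmodule R M N \<and> S \<subseteq> N}"

definition generates :: "('a, 'c) ring_scheme \<Rightarrow> ('a, 'b, 'd) module_scheme \<Rightarrow> 'b set \<Rightarrow> bool" where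
  "generates R M S \<longleftrightarrow> S \<subseteq> carrier M \<and> lspan R M S = carrier M"

definition finitely_generated :: "('a, 'c) ring_scheme \<Rightarrow> ('a, 'b, 'd) module_scheme \<Rightarrow> bool" where
  "finitely_generated R M \<longleftrightarrow> (\<exists>S. finite S \<and> generates R M S)"

definition semisimple :: "('a, 'c) ring_scheme \<Rightarrow> ('a, 'b, 'd) module_scheme \<Rightarrow> bool" where
  "semisimple R M \<longleftrightarrow> (\<forall>N. lsubmodule R M N \<longrightarrow>
     (\<exists>N'. lsubmodule R M N' \<and> N \<inter> N' = {\<zero>\<^bsub>M\<^esub>} \<and>
           (\<forall>x\<in>carrier M. \<exists>u\<in>N. \<exists>v\<in>N'. x = u \<oplus>\<^bsub>M\<^esub> v)))"

definition composition_series ::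
  "('a, 'c) ring_scheme \<Rightarrow> ('a, 'b, 'd) module_scheme \<Rightarrow> (nat \<Rightarrow> 'b set) \<Rightarrow> nat \<Rightarrow> bool" where
  "composition_series R M N k \<longleftrightarrow>
     (\<forall>i\<le>k. lsubmodule R M (N i)) \<and> N 0 = {\<zero>\<^bsub>M\<^esub>} \<and> N k = carrier M \<and>
     (\<forall>i<k. N i \<subset> N (Suc i) \<and>
        \<not> (\<exists>L. lsubmodule R M L \<and> N i \<subset> L \<and> L \<subset> N (Suc i)))"

text \<open>Composition length (well defined by Jordan-Hoelder).\<close>
definition comp_length :: "('a, 'c) ring_scheme \<Rightarrow> ('a, 'b, 'd) module_scheme \<Rightarrow> nat" where
  "comp_length R M = (THE k. \<exists>N. composition_series R M N k)"

definition End :: "('a, 'c) ring_scheme \<Rightarrow> ('a, 'b, 'd) module_scheme \<Rightarrow> ('b \<Rightarrow> 'b) set" where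
  "End R M = {f. f \<in> carrier M \<rightarrow> carrier M \<and>
      (\<forall>x\<in>carrier M. \<forall>y\<in>carrier M. f (x \<oplus>\<^bsub>M\<^esub> y) = f x \<oplus>\<^bsub>M\<^esub> f y) \<and>
      (\<forall>a\<in>carrier R. \<forall>x\<in>carrier M. f (a \<odot>\<^bsub>M\<^esub> x) = a \<odot>\<^bsub>M\<^esub> f x)}"

text \<open>Maps are compared on the carrier only.\<close>
definition centralizer :: "('a, 'c) ring_scheme \<Rightarrow> ('a, 'b, 'd) module_scheme \<Rightarrow> ('b \<Rightarrow> 'b) \<Rightarrow> ('b \<Rightarrow> 'b) set" where
  "centralizer R M \<alpha> = {\<psi> \<in> End R M. \<forall>x\<in>carrier M. \<psi> (\<alpha> x) = \<alpha> (\<psi> x)}"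

definition nilpotent_index :: "('a, 'b, 'd) module_scheme \<Rightarrow> ('b \<Rightarrow> 'b) \<Rightarrow> nat \<Rightarrow> bool" where
  "nilpotent_index M \<phi> n \<longleftrightarrow> (\<forall>x\<in>carrier M. (\<phi> ^^ n) x = \<zero>\<^bsub>M\<^esub>) \<and>
      (\<exists>x\<in>carrier M. (\<phi> ^^ (n - 1)) x \<noteq> \<zero>\<^bsub>M\<^esub>)"

definition left_ideal :: "('a, 'c) ring_scheme \<Rightarrow> 'a set \<Rightarrow> bool" where
  "left_ideal R I \<longleftrightarrow> additive_subgroup I R \<and>
     (\<forall>r\<in>carrier R. \<forall>x\<in>I. r \<otimes>\<^bsub>R\<^esub> x \<in> I)"

definition maximal_left_ideal :: "('a, 'c) ring_scheme \<Rightarrow> 'a set \<Rightarrow> bool" where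
  "maximal_left_ideal R I \<longleftrightarrow> left_ideal R I \<and> I \<noteq> carrier R \<and>
     (\<forall>K. left_ideal R K \<and> I \<subseteq> K \<and> K \<noteq> carrier R \<longrightarrow> K = I)"

definition jacobson :: "('a, 'c) ring_scheme \<Rightarrow> 'a set" where
  "jacobson R = carrier R \<inter> \<Inter>{I. maximal_left_ideal R I}"

definition division_ring :: "('a, 'c) ring_scheme \<Rightarrow> bool" where
  "division_ring D \<longleftrightarrow> ring D \<and> \<one>\<^bsub>D\<^esub> \<noteq> \<zero>\<^bsub>D\<^esub> \<and>
     (\<forall>x\<in>carrier D - {\<zero>\<^bsub>D\<^esub>}. x \<in> Units D)"

definition local_ring :: "('a, 'c) ring_scheme \<Rightarrow> bool" where
  "local_ring R \<longleftrightarrow> ring R \<and> division_ring (R Quot jacobson R)"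

end

theory Submission
  imports Defs
begin

locale lmod =
  fixes R :: "('a,'c) ring_scheme" and M :: "('a,'b,'d) module_scheme"
  assumes lm: "left_module R M"
begin

lemma ringR: "ring R" using lm unfolding left_module_def by blast
lemma agM: "abelian_group M" using lm unfolding left_module_def by blast

sublocale R: ring R by (rule ringR)
sublocale M: abelian_group M by (rule agM)

lemma sm_closed[intro,simp]: "a \<in> carrier R \<Longrightarrow> x \<in> carrier M \<Longrightarrow> a \<odot>\<^bsub>M\<^esub> x \<in> carrier M"
  using lm unfolding left_module_def by blast
lemma sm_ldistr: "a \<in> carrier R \<Longrightarrow> b \<in> carrier R \<Longrightarrow> x \<in> carrier M \<Longrightarrow>
   (a \<oplus>\<^bsub>R\<^esub> b) \<odot>\<^bsub>M\<^esub> x = a \<odot>\<^bsub>M\<^esub> x \<oplus>\<^bsub>M\<^esub> b \<odot>\<^bsub>M\<^esub> x"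
  using lm unfolding left_module_def by blast
lemma sm_rdistr: "a \<in> carrier R \<Longrightarrow> x \<in> carrier M \<Longrightarrow> y \<in> carrier M \<Longrightarrow>
   a \<odot>\<^bsub>M\<^esub> (x \<oplus>\<^bsub>M\<^esub> y) = a \<odot>\<^bsub>M\<^esub> x \<oplus>\<^bsub>M\<^esub> a \<odot>\<^bsub>M\<^esub> y"
  using lm unfolding left_module_def by blast
lemma sm_assoc: "a \<in> carrier R \<Longrightarrow> b \<in> carrier R \<Longrightarrow> x \<in> carrier M \<Longrightarrow>
   (a \<otimes>\<^bsub>R\<^esub> b) \<odot>\<^bsub>M\<^esub> x = a \<odot>\<^bsub>M\<^esub> (b \<odot>\<^bsub>M\<^esub> x)"
  using lm unfolding left_module_def by blast
lemma sm_one[simp]: "x \<in> carrier M \<Longrightarrow> \<one>\<^bsub>R\<^esub> \<odot>\<^bsub>M\<^esub> x = x"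
  using lm unfolding left_module_def by blast

lemma sm_zero[simp]: "a \<in> carrier R \<Longrightarrow> a \<odot>\<^bsub>M\<^esub> \<zero>\<^bsub>M\<^esub> = \<zero>\<^bsub>M\<^esub>"
proof -
  assume a: "a \<in> carrier R"
  have "a \<odot>\<^bsub>M\<^esub> \<zero>\<^bsub>M\<^esub> \<oplus>\<^bsub>M\<^esub> a \<odot>\<^bsub>M\<^esub> \<zero>\<^bsub>M\<^esub> = a \<odot>\<^bsub>M\<^esub> \<zero>\<^bsub>M\<^esub> \<oplus>\<^bsub>M\<^esub> \<zero>\<^bsub>M\<^esub>"
    using sm_rdistr[OF a, of "\<zero>\<^bsub>M\<^esub>" "\<zero>\<^bsub>M\<^esub>"] a by simp
  then show ?thesis using a by simp
qed

lemma zero_sm[simp]: "x \<in> carrier M \<Longrightarrow> \<zero>\<^bsub>R\<^esub> \<odot>\<^bsub>M\<^esub> x = \<zero>\<^bsub>M\<^esub>"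
proof -
  assume x: "x \<in> carrier M"
  have "\<zero>\<^bsub>R\<^esub> \<odot>\<^bsub>M\<^esub> x \<oplus>\<^bsub>M\<^esub> \<zero>\<^bsub>R\<^esub> \<odot>\<^bsub>M\<^esub> x = \<zero>\<^bsub>R\<^esub> \<odot>\<^bsub>M\<^esub> x \<oplus>\<^bsub>M\<^esub> \<zero>\<^bsub>M\<^esub>"
    using sm_ldistr[of "\<zero>\<^bsub>R\<^esub>" "\<zero>\<^bsub>R\<^esub>" x] x by simp
  then show ?thesis using x by simp
qed

lemma sm_uminus: "a \<in> carrier R \<Longrightarrow> x \<in> carrier M \<Longrightarrow> (\<ominus>\<^bsub>R\<^esub> a) \<odot>\<^bsub>M\<^esub> x = \<ominus>\<^bsub>M\<^esub> (a \<odot>\<^bsub>M\<^esub> x)"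
proof -
  assume a: "a \<in> carrier R" and x: "x \<in> carrier M"
  have "a \<odot>\<^bsub>M\<^esub> x \<oplus>\<^bsub>M\<^esub> (\<ominus>\<^bsub>R\<^esub> a) \<odot>\<^bsub>M\<^esub> x = \<zero>\<^bsub>M\<^esub>"
    using sm_ldistr[of a "\<ominus>\<^bsub>R\<^esub> a" x] a x by (simp add: R.r_neg)
  then show ?thesis using a x by (metis M.minus_equality M.a_comm R.a_inv_closed sm_closed)
qed

lemma sm_minus: "a \<in> carrier R \<Longrightarrow> x \<in> carrier M \<Longrightarrow> a \<odot>\<^bsub>M\<^esub> (\<ominus>\<^bsub>M\<^esub> x) = \<ominus>\<^bsub>M\<^esub> (a \<odot>\<^bsub>M\<^esub> x)"
proof -
  assume a: "a \<in> carrier R" and x: "x \<in> carrier M"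
  have "a \<odot>\<^bsub>M\<^esub> x \<oplus>\<^bsub>M\<^esub> a \<odot>\<^bsub>M\<^esub> (\<ominus>\<^bsub>M\<^esub> x) = \<zero>\<^bsub>M\<^esub>"
    using sm_rdistr[of a x "\<ominus>\<^bsub>M\<^esub> x"] a x by (simp add: M.r_neg)
  then show ?thesis using a x by (metis M.minus_equality M.a_comm M.a_inv_closed sm_closed)
qed

lemma sm_finsum: "finite A \<Longrightarrow> a \<in> carrier R \<Longrightarrow> f \<in> A \<rightarrow> carrier M \<Longrightarrow>
   a \<odot>\<^bsub>M\<^esub> (\<Oplus>\<^bsub>M\<^esub>i\<in>A. f i) = (\<Oplus>\<^bsub>M\<^esub>i\<in>A. a \<odot>\<^bsub>M\<^esub> f i)"
proof (induction A rule: finite_induct)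
  case empty then show ?case by simp
next
  case (insert x F)
  then have f: "f \<in> F \<rightarrow> carrier M" "f x \<in> carrier M" by auto
  have g: "(\<lambda>i. a \<odot>\<^bsub>M\<^esub> f i) \<in> F \<rightarrow> carrier M" using f insert by auto
  show ?case using insert f g by (simp add: M.finsum_insert sm_rdistr M.finsum_closed)
qed


lemma lsubD:
  assumes "lsubmodule R M N"
  shows "N \<subseteq> carrier M" "\<zero>\<^bsub>M\<^esub> \<in> N" "\<And>x y. x \<in> N \<Longrightarrow> y \<in> N \<Longrightarrow> x \<oplus>\<^bsub>M\<^esub> y \<in> N"
    "\<And>x. x \<in> N \<Longrightarrow> \<ominus>\<^bsub>M\<^esub> x \<in> N" "\<And>a x. a \<in> carrier R \<Longrightarrow> x \<in> N \<Longrightarrow> a \<odot>\<^bsub>M\<^esub> x \<in> N"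
  using assms unfolding lsubmodule_def by auto

lemma lsub_minus: "lsubmodule R M N \<Longrightarrow> x \<in> N \<Longrightarrow> y \<in> N \<Longrightarrow> x \<ominus>\<^bsub>M\<^esub> y \<in> N"
  unfolding a_minus_def using lsubD(3,4) by metis

lemma lsub_carrier: "lsubmodule R M (carrier M)"
  unfolding lsubmodule_def by auto

lemma lspan_least: "lsubmodule R M N \<Longrightarrow> S \<subseteq> N \<Longrightarrow> lspan R M S \<subseteq> N"
  unfolding lspan_def by blast

lemma lspan_incl: "S \<subseteq> lspan R M S"
  unfolding lspan_def by blast

lemma lspan_lsub: assumes "S \<subseteq> carrier M" shows "lsubmodule R M (lspan R M S)"
proof -
  let ?F = "{N. lsubmodule R M N \<and> S \<subseteq> N}"
  have ne: "carrier M \<in> ?F" using assms lsub_carrier by auto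
  have sub: "\<And>N. N \<in> ?F \<Longrightarrow> lsubmodule R M N" by blast
  have 1: "\<Inter> ?F \<subseteq> carrier M" using ne by blast
  have 2: "\<zero>\<^bsub>M\<^esub> \<in> \<Inter> ?F" using lsubD(2)[OF sub] by blast
  have 3: "x \<oplus>\<^bsub>M\<^esub> y \<in> \<Inter> ?F" if "x \<in> \<Inter> ?F" "y \<in> \<Inter> ?F" for x y
  proof (rule InterI)
    fix N assume N: "N \<in> ?F"
    show "x \<oplus>\<^bsub>M\<^esub> y \<in> N" using lsubD(3)[OF sub[OF N]] that N by blast
  qed
  have 4: "\<ominus>\<^bsub>M\<^esub> x \<in> \<Inter> ?F" if "x \<in> \<Inter> ?F" for x
  proof (rule InterI)
    fix N assume N: "N \<in> ?F"
    show "\<ominus>\<^bsub>M\<^esub> x \<in> N" using lsubD(4)[OF sub[OF N]] that N by blast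
  qed
  have 5: "a \<odot>\<^bsub>M\<^esub> x \<in> \<Inter> ?F" if "a \<in> carrier R" "x \<in> \<Inter> ?F" for a x
  proof (rule InterI)
    fix N assume N: "N \<in> ?F"
    show "a \<odot>\<^bsub>M\<^esub> x \<in> N" using lsubD(5)[OF sub[OF N]] that N by blast
  qed
  show ?thesis unfolding lsubmodule_def lspan_def using 1 2 3 4 5 by blast
qed

lemma lspan_carrier: "S \<subseteq> carrier M \<Longrightarrow> lspan R M S \<subseteq> carrier M"
  using lspan_lsub lsubD(1) by blast

lemma lspan_mono: "T \<subseteq> carrier M \<Longrightarrow> S \<subseteq> T \<Longrightarrow> lspan R M S \<subseteq> lspan R M T"
  by (meson lspan_incl lspan_least lspan_lsub order_trans)

lemma lsub_zero: "lsubmodule R M {\<zero>\<^bsub>M\<^esub>}"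
  unfolding lsubmodule_def by auto

lemma lspan_empty: "lspan R M {} = {\<zero>\<^bsub>M\<^esub>}"
  using lspan_least[OF lsub_zero] lspan_lsub[of "{}"] lsubD(2) by blast

lemma lspan_zeros: "S \<subseteq> {\<zero>\<^bsub>M\<^esub>} \<Longrightarrow> lspan R M S = {\<zero>\<^bsub>M\<^esub>}"
  using lspan_least[OF lsub_zero] lspan_lsub[of S] lsubD(2) by blast

lemma lspan_insert:
  assumes S: "S \<subseteq> carrier M" and z: "z \<in> carrier M"
  shows "lspan R M (insert z S) = {a \<odot>\<^bsub>M\<^esub> z \<oplus>\<^bsub>M\<^esub> u | a u. a \<in> carrier R \<and> u \<in> lspan R M S}"
    (is "?L = ?T")
proof
  have P: "lsubmodule R M (lspan R M S)" using lspan_lsub[OF S] .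
  have Pc: "lspan R M S \<subseteq> carrier M" using lsubD(1)[OF P] .
  have P0: "\<zero>\<^bsub>M\<^esub> \<in> lspan R M S" using lsubD(2)[OF P] .
  have Padd: "u \<oplus>\<^bsub>M\<^esub> v \<in> lspan R M S" if "u \<in> lspan R M S" "v \<in> lspan R M S" for u v
    using lsubD(3)[OF P] that .
  have Pneg: "\<ominus>\<^bsub>M\<^esub> u \<in> lspan R M S" if "u \<in> lspan R M S" for u
    using lsubD(4)[OF P] that .
  have Psm: "b \<odot>\<^bsub>M\<^esub> u \<in> lspan R M S" if "b \<in> carrier R" "u \<in> lspan R M S" for b u
    using lsubD(5)[OF P] that .
  have T1: "?T \<subseteq> carrier M"
  proof
    fix x assume "x \<in> ?T"
    then obtain a u where "a \<in> carrier R" "u \<in> lspan R M S" "x = a \<odot>\<^bsub>M\<^esub> z \<oplus>\<^bsub>M\<^esub> u" by blast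
    then show "x \<in> carrier M" using Pc z by (metis M.add.m_closed sm_closed subsetD)
  qed
  have T2: "\<zero>\<^bsub>M\<^esub> \<in> ?T"
  proof -
    have "\<zero>\<^bsub>M\<^esub> = \<zero>\<^bsub>R\<^esub> \<odot>\<^bsub>M\<^esub> z \<oplus>\<^bsub>M\<^esub> \<zero>\<^bsub>M\<^esub>" using z by simp
    then show ?thesis using P0 R.zero_closed by blast
  qed
  have T3: "x \<oplus>\<^bsub>M\<^esub> y \<in> ?T" if "x \<in> ?T" "y \<in> ?T" for x y
  proof -
    from that obtain a u b v where a: "a \<in> carrier R" "u \<in> lspan R M S" "x = a \<odot>\<^bsub>M\<^esub> z \<oplus>\<^bsub>M\<^esub> u"
      and b: "b \<in> carrier R" "v \<in> lspan R M S" "y = b \<odot>\<^bsub>M\<^esub> z \<oplus>\<^bsub>M\<^esub> v" by blast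
    have uv: "u \<in> carrier M" "v \<in> carrier M" using a b Pc by auto
    have "x \<oplus>\<^bsub>M\<^esub> y = (a \<oplus>\<^bsub>R\<^esub> b) \<odot>\<^bsub>M\<^esub> z \<oplus>\<^bsub>M\<^esub> (u \<oplus>\<^bsub>M\<^esub> v)"
      using a b uv z by (simp add: sm_ldistr M.a_ac)
    moreover have "a \<oplus>\<^bsub>R\<^esub> b \<in> carrier R" using a b by simp
    moreover have "u \<oplus>\<^bsub>M\<^esub> v \<in> lspan R M S" using Padd a b by blast
    ultimately show ?thesis by blast
  qed
  have T4: "\<ominus>\<^bsub>M\<^esub> x \<in> ?T" if "x \<in> ?T" for x
  proof -
    from that obtain a u where a: "a \<in> carrier R" "u \<in> lspan R M S" "x = a \<odot>\<^bsub>M\<^esub> z \<oplus>\<^bsub>M\<^esub> u" by blast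
    have uv: "u \<in> carrier M" using a Pc by auto
    have "\<ominus>\<^bsub>M\<^esub> x = (\<ominus>\<^bsub>R\<^esub> a) \<odot>\<^bsub>M\<^esub> z \<oplus>\<^bsub>M\<^esub> (\<ominus>\<^bsub>M\<^esub> u)"
      using a uv z by (simp add: sm_uminus M.minus_add)
    moreover have "\<ominus>\<^bsub>R\<^esub> a \<in> carrier R" using a by simp
    moreover have "\<ominus>\<^bsub>M\<^esub> u \<in> lspan R M S" using Pneg a by blast
    ultimately show ?thesis by blast
  qed
  have T5: "b \<odot>\<^bsub>M\<^esub> x \<in> ?T" if "b \<in> carrier R" "x \<in> ?T" for b x
  proof -
    from that obtain a u where a: "a \<in> carrier R" "u \<in> lspan R M S" "x = a \<odot>\<^bsub>M\<^esub> z \<oplus>\<^bsub>M\<^esub> u" by blast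
    have uv: "u \<in> carrier M" using a Pc by auto
    have "b \<odot>\<^bsub>M\<^esub> x = (b \<otimes>\<^bsub>R\<^esub> a) \<odot>\<^bsub>M\<^esub> z \<oplus>\<^bsub>M\<^esub> (b \<odot>\<^bsub>M\<^esub> u)"
      using a uv z that by (simp add: sm_rdistr sm_assoc)
    moreover have "b \<otimes>\<^bsub>R\<^esub> a \<in> carrier R" using a that by simp
    moreover have "b \<odot>\<^bsub>M\<^esub> u \<in> lspan R M S" using Psm a that by blast
    ultimately show ?thesis by blast
  qed
  have T: "lsubmodule R M ?T"
    unfolding lsubmodule_def
    apply (intro conjI ballI)
        apply (rule T1)
       apply (rule T2)
      apply (erule (1) T3)
     apply (erule T4)
    apply (erule (1) T5)
    done
  have "insert z S \<subseteq> ?T"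
  proof
    fix x assume "x \<in> insert z S"
    then show "x \<in> ?T"
    proof
      assume "x = z"
      then have "x = \<one>\<^bsub>R\<^esub> \<odot>\<^bsub>M\<^esub> z \<oplus>\<^bsub>M\<^esub> \<zero>\<^bsub>M\<^esub>" using z by simp
      then show ?thesis using P0 R.one_closed by blast
    next
      assume xS: "x \<in> S"
      then have "x = \<zero>\<^bsub>R\<^esub> \<odot>\<^bsub>M\<^esub> z \<oplus>\<^bsub>M\<^esub> x" using z S by auto
      moreover have "x \<in> lspan R M S" using xS lspan_incl by blast
      ultimately show ?thesis using R.zero_closed by blast
    qed
  qed
  then show "?L \<subseteq> ?T" using lspan_least[OF T] by blast
  have iS: "insert z S \<subseteq> carrier M" using S z by blast
  have L: "lsubmodule R M ?L" using lspan_lsub[OF iS] .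
  have zL: "z \<in> ?L" using lspan_incl by blast
  have SL: "lspan R M S \<subseteq> ?L" using lspan_mono[OF iS] by blast
  show "?T \<subseteq> ?L"
  proof
    fix x assume "x \<in> ?T"
    then obtain a u where a: "a \<in> carrier R" "u \<in> lspan R M S" "x = a \<odot>\<^bsub>M\<^esub> z \<oplus>\<^bsub>M\<^esub> u" by blast
    have "a \<odot>\<^bsub>M\<^esub> z \<in> ?L" using lsubD(5)[OF L] a zL by blast
    moreover have "u \<in> ?L" using SL a by blast
    ultimately show "x \<in> ?L" using lsubD(3)[OF L] a by blast
  qed
qed

lemma lspan_single: assumes z: "z \<in> carrier M" shows "lspan R M {z} = {a \<odot>\<^bsub>M\<^esub> z | a. a \<in> carrier R}"
proof -
  have "{a \<odot>\<^bsub>M\<^esub> z \<oplus>\<^bsub>M\<^esub> u | a u. a \<in> carrier R \<and> u \<in> {\<zero>\<^bsub>M\<^esub>}} = {a \<odot>\<^bsub>M\<^esub> z | a. a \<in> carrier R}"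
  proof (intro equalityI subsetI)
    fix x assume "x \<in> {a \<odot>\<^bsub>M\<^esub> z \<oplus>\<^bsub>M\<^esub> u | a u. a \<in> carrier R \<and> u \<in> {\<zero>\<^bsub>M\<^esub>}}"
    then obtain a where "a \<in> carrier R" "x = a \<odot>\<^bsub>M\<^esub> z \<oplus>\<^bsub>M\<^esub> \<zero>\<^bsub>M\<^esub>" by blast
    then show "x \<in> {a \<odot>\<^bsub>M\<^esub> z | a. a \<in> carrier R}" using z by auto
  next
    fix x assume "x \<in> {a \<odot>\<^bsub>M\<^esub> z | a. a \<in> carrier R}"
    then obtain a where a: "a \<in> carrier R" "x = a \<odot>\<^bsub>M\<^esub> z" by blast
    then have "x = a \<odot>\<^bsub>M\<^esub> z \<oplus>\<^bsub>M\<^esub> \<zero>\<^bsub>M\<^esub>" using z by simp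
    then show "x \<in> {a \<odot>\<^bsub>M\<^esub> z \<oplus>\<^bsub>M\<^esub> u | a u. a \<in> carrier R \<and> u \<in> {\<zero>\<^bsub>M\<^esub>}}" using a by blast
  qed
  then show ?thesis using lspan_insert[of "{}" z] z by (simp add: lspan_empty)
qed

lemma lspan_insert_in:
  assumes S: "S \<subseteq> carrier M" and z: "z \<in> lspan R M S"
  shows "lspan R M (insert z S) = lspan R M S"
proof
  have "insert z S \<subseteq> lspan R M S" using z lspan_incl[of S] by blast
  then show "lspan R M (insert z S) \<subseteq> lspan R M S" using lspan_least[OF lspan_lsub[OF S]] by blast
  have "insert z S \<subseteq> carrier M" using S z lspan_carrier[OF S] by blast
  then show "lspan R M S \<subseteq> lspan R M (insert z S)" using lspan_mono by blast
qed

lemma EndD: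
  assumes "f \<in> End R M"
  shows "\<And>x. x \<in> carrier M \<Longrightarrow> f x \<in> carrier M"
    "\<And>x y. x \<in> carrier M \<Longrightarrow> y \<in> carrier M \<Longrightarrow> f (x \<oplus>\<^bsub>M\<^esub> y) = f x \<oplus>\<^bsub>M\<^esub> f y"
    "\<And>a x. a \<in> carrier R \<Longrightarrow> x \<in> carrier M \<Longrightarrow> f (a \<odot>\<^bsub>M\<^esub> x) = a \<odot>\<^bsub>M\<^esub> f x"
  using assms unfolding End_def by auto

lemma End_zero: "f \<in> End R M \<Longrightarrow> f \<zero>\<^bsub>M\<^esub> = \<zero>\<^bsub>M\<^esub>"
  using EndD(3)[of f "\<zero>\<^bsub>R\<^esub>" "\<zero>\<^bsub>M\<^esub>"] EndD(1)[of f "\<zero>\<^bsub>M\<^esub>"] by simp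

lemma End_minus: "f \<in> End R M \<Longrightarrow> x \<in> carrier M \<Longrightarrow> f (\<ominus>\<^bsub>M\<^esub> x) = \<ominus>\<^bsub>M\<^esub> f x"
  using EndD(3)[of f "\<ominus>\<^bsub>R\<^esub> \<one>\<^bsub>R\<^esub>" x] EndD(1)[of f x] by (simp add: sm_uminus)

lemma End_finsum: assumes f: "f \<in> End R M" shows "finite A \<Longrightarrow> g \<in> A \<rightarrow> carrier M \<Longrightarrow>
    f (\<Oplus>\<^bsub>M\<^esub>i\<in>A. g i) = (\<Oplus>\<^bsub>M\<^esub>i\<in>A. f (g i))"
proof (induction A rule: finite_induct)
  case empty then show ?case by (simp add: End_zero[OF f])
next
  case (insert x F)
  then have g: "g \<in> F \<rightarrow> carrier M" "g x \<in> carrier M" by auto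
  have g2: "(\<lambda>i. f (g i)) \<in> F \<rightarrow> carrier M" using g insert EndD(1)[OF f] by auto
  show ?case using insert g g2 by (simp add: M.finsum_insert EndD[OF f] M.finsum_closed)
qed

lemma End_id: "(\<lambda>x. x) \<in> End R M" unfolding End_def by auto

lemma End_comp: "f \<in> End R M \<Longrightarrow> g \<in> End R M \<Longrightarrow> (\<lambda>x. f (g x)) \<in> End R M"
  unfolding End_def by (auto simp: Pi_def)

lemma End_comp': "f \<in> End R M \<Longrightarrow> g \<in> End R M \<Longrightarrow> f \<circ> g \<in> End R M"
  using End_comp unfolding comp_def .

lemma End_pow: "f \<in> End R M \<Longrightarrow> f ^^ k \<in> End R M"
  by (induction k) (auto simp: End_id[unfolded id_def[symmetric]] End_comp' simp del: id_apply)

lemma End_image_lspan: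
  assumes f: "f \<in> End R M" and S: "S \<subseteq> carrier M"
  shows "f ` lspan R M S \<subseteq> lspan R M (f ` S)"
proof -
  have fS: "f ` S \<subseteq> carrier M" using S EndD(1)[OF f] by auto
  have P: "lsubmodule R M (lspan R M (f ` S))" using lspan_lsub[OF fS] .
  let ?N = "{x \<in> carrier M. f x \<in> lspan R M (f ` S)}"
  have "lsubmodule R M ?N" unfolding lsubmodule_def
  proof (intro conjI ballI)
    show "?N \<subseteq> carrier M" by blast
    show "\<zero>\<^bsub>M\<^esub> \<in> ?N" using End_zero[OF f] lsubD(2)[OF P] by simp
    show "x \<oplus>\<^bsub>M\<^esub> y \<in> ?N" if "x \<in> ?N" "y \<in> ?N" for x y
      using that EndD(2)[OF f, of x y] lsubD(3)[OF P, of "f x" "f y"] by simp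
    show "\<ominus>\<^bsub>M\<^esub> x \<in> ?N" if "x \<in> ?N" for x
      using that End_minus[OF f, of x] lsubD(4)[OF P, of "f x"] by simp
    show "a \<odot>\<^bsub>M\<^esub> x \<in> ?N" if "a \<in> carrier R" "x \<in> ?N" for a x
      using that EndD(3)[OF f, of a x] lsubD(5)[OF P, of a "f x"] by simp
  qed
  moreover have "S \<subseteq> ?N" using S lspan_incl[of "f ` S"] by blast
  ultimately show ?thesis using lspan_least by blast
qed

lemma End_agree:
  assumes f: "f \<in> End R M" and g: "g \<in> End R M" and S: "S \<subseteq> carrier M"
    and span: "lspan R M S = carrier M" and eq: "\<And>s. s \<in> S \<Longrightarrow> f s = g s"
    and x: "x \<in> carrier M"
  shows "f x = g x"
proof -
  let ?N = "{x \<in> carrier M. f x = g x}"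
  have "lsubmodule R M ?N" unfolding lsubmodule_def
  proof (intro conjI ballI)
    show "?N \<subseteq> carrier M" by blast
    show "\<zero>\<^bsub>M\<^esub> \<in> ?N" using End_zero[OF f] End_zero[OF g] by simp
    show "x \<oplus>\<^bsub>M\<^esub> y \<in> ?N" if "x \<in> ?N" "y \<in> ?N" for x y
      using that EndD(2)[OF f, of x y] EndD(2)[OF g, of x y] by simp
    show "\<ominus>\<^bsub>M\<^esub> x \<in> ?N" if "x \<in> ?N" for x
      using that End_minus[OF f, of x] End_minus[OF g, of x] by simp
    show "a \<odot>\<^bsub>M\<^esub> x \<in> ?N" if "a \<in> carrier R" "x \<in> ?N" for a x
      using that EndD(3)[OF f, of a x] EndD(3)[OF g, of a x] by simp
  qed
  moreover have "S \<subseteq> ?N" using S eq by blast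
  ultimately show ?thesis using lspan_least span x by blast
qed

lemma End_pow_comm:
  assumes f: "f \<in> End R M" and p: "p \<in> End R M" and c: "\<And>z. z \<in> carrier M \<Longrightarrow> f (p z) = p (f z)"
    and x: "x \<in> carrier M"
  shows "f ((p ^^ k) x) = (p ^^ k) (f x)"
  using x
proof (induction k arbitrary: x)
  case 0 then show ?case by simp
next
  case (Suc k)
  have "(p ^^ k) x \<in> carrier M" using EndD(1)[OF End_pow[OF p]] Suc.prems by blast
  then show ?case using Suc by (simp add: c)
qed

end

lemma J_sub: "jacobson R \<subseteq> carrier R" unfolding jacobson_def by blast

lemma maxI_sub: "maximal_left_ideal R I \<Longrightarrow> additive_subgroup I R"
  unfolding maximal_left_ideal_def left_ideal_def by blast

lemma J_zero: assumes rR: "ring R" shows "\<zero>\<^bsub>R\<^esub> \<in> jacobson R"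
proof -
  have "\<zero>\<^bsub>R\<^esub> \<in> I" if "maximal_left_ideal R I" for I
    using additive_subgroup.zero_closed[OF maxI_sub[OF that]] .
  moreover have "\<zero>\<^bsub>R\<^esub> \<in> carrier R" using ring.ring_simprules(2)[OF rR] .
  ultimately show ?thesis unfolding jacobson_def by blast
qed

lemma coset_def2: fixes R (structure) shows "I +>\<^bsub>R\<^esub> a = (\<Union>h\<in>I. {h \<oplus>\<^bsub>R\<^esub> a})"
  by (simp add: a_r_coset_def')

lemma coset_mem: fixes R (structure) assumes "ring R" "\<zero>\<^bsub>R\<^esub> \<in> I" "r \<in> carrier R" shows "r \<in> I +>\<^bsub>R\<^esub> r"
proof -
  interpret ring R by fact
  have "r = \<zero> \<oplus> r" using assms by simp
  then show ?thesis using assms(2) unfolding coset_def2 by blast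
qed

lemma local_quot_ring: "local_ring R \<Longrightarrow> ring (R Quot jacobson R)"
  unfolding local_ring_def division_ring_def by blast

lemma quot_simps:
  fixes R (structure) and A B :: "'a set"
  shows   "carrier (R Quot I) = (\<Union>a\<in>carrier R. {I +>\<^bsub>R\<^esub> a})"
  "\<zero>\<^bsub>R Quot I\<^esub> = I" "\<one>\<^bsub>R Quot I\<^esub> = I +>\<^bsub>R\<^esub> \<one>\<^bsub>R\<^esub>"
  "A \<otimes>\<^bsub>R Quot I\<^esub> B = rcoset_mult R I A B"
  unfolding FactRing_def by (simp_all add: A_RCOSETS_def')

lemma quot_carrier_coset: "r \<in> carrier R \<Longrightarrow> I +>\<^bsub>R\<^esub> r \<in> carrier (R Quot I)"
  unfolding quot_simps by blast

lemma J_right: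
  fixes R (structure)
  assumes loc: "local_ring R" and j: "j \<in> jacobson R" and r: "r \<in> carrier R"
  shows "j \<otimes>\<^bsub>R\<^esub> r \<in> jacobson R"
proof -
  let ?J = "jacobson R"
  have rR: "ring R" using loc unfolding local_ring_def by blast
  interpret ring R by fact
  interpret Q: ring "R Quot ?J" using local_quot_ring[OF loc] .
  have X: "?J +> r \<in> carrier (R Quot ?J)" using quot_carrier_coset[OF r] .
  have "\<zero>\<^bsub>R Quot ?J\<^esub> \<otimes>\<^bsub>R Quot ?J\<^esub> (?J +> r) = \<zero>\<^bsub>R Quot ?J\<^esub>" using Q.l_null[OF X] .
  then have eq: "rcoset_mult R ?J ?J (?J +> r) = ?J" unfolding quot_simps .
  have rX: "r \<in> ?J +> r" using coset_mem[OF rR J_zero[OF rR] r] .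
  have jr: "j \<otimes> r \<in> carrier R" using j r J_sub m_closed by (metis subsetD)
  have "?J +> (j \<otimes> r) \<subseteq> (\<Union>b\<in>?J +> r. ?J +> (j \<otimes> b))" by (rule UN_upper[OF rX])
  also have "\<dots> \<subseteq> (\<Union>a\<in>?J. \<Union>b\<in>?J +> r. ?J +> (a \<otimes> b))" by (rule UN_upper[OF j])
  finally have "?J +> (j \<otimes> r) \<subseteq> rcoset_mult R ?J ?J (?J +> r)"
    unfolding rcoset_mult_def .
  moreover have "j \<otimes> r \<in> ?J +> (j \<otimes> r)" using coset_mem[OF rR J_zero[OF rR] jr] .
  ultimately show ?thesis using eq by blast
qed

lemma J_F1:
  fixes R (structure)
  assumes loc: "local_ring R" and r: "r \<in> carrier R" and nJ: "r \<notin> jacobson R"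
  shows "\<exists>s\<in>carrier R. \<exists>h\<in>jacobson R. s \<otimes>\<^bsub>R\<^esub> r = h \<oplus>\<^bsub>R\<^esub> \<one>\<^bsub>R\<^esub>"
proof -
  let ?J = "jacobson R"
  let ?Q = "R Quot ?J"
  have rR: "ring R" using loc unfolding local_ring_def by blast
  interpret ring R by fact
  have div: "division_ring ?Q" using loc unfolding local_ring_def by blast
  have X: "?J +> r \<in> carrier ?Q" using quot_carrier_coset[OF r] .
  have rX: "r \<in> ?J +> r" using coset_mem[OF rR J_zero[OF rR] r] .
  have "?J +> r \<noteq> \<zero>\<^bsub>?Q\<^esub>" using rX nJ unfolding quot_simps by blast
  then have "?J +> r \<in> Units ?Q" using div X unfolding division_ring_def by blast
  then obtain Y where Y: "Y \<in> carrier ?Q" "Y \<otimes>\<^bsub>?Q\<^esub> (?J +> r) = \<one>\<^bsub>?Q\<^esub>"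
    unfolding Units_def by blast
  from Y(1) obtain s where s: "s \<in> carrier R" "Y = ?J +> s"
    unfolding quot_simps by blast
  have sY: "s \<in> Y" using coset_mem[OF rR J_zero[OF rR] s(1)] s(2) by simp
  have eq: "rcoset_mult R ?J Y (?J +> r) = ?J +> \<one>" using Y(2) unfolding quot_simps .
  have sr: "s \<otimes> r \<in> carrier R" using s r m_closed by blast
  have "?J +> (s \<otimes> r) \<subseteq> (\<Union>b\<in>?J +> r. ?J +> (s \<otimes> b))" by (rule UN_upper[OF rX])
  also have "\<dots> \<subseteq> (\<Union>a\<in>Y. \<Union>b\<in>?J +> r. ?J +> (a \<otimes> b))" by (rule UN_upper[OF sY])
  finally have "?J +> (s \<otimes> r) \<subseteq> rcoset_mult R ?J Y (?J +> r)"
    unfolding rcoset_mult_def .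
  moreover have "s \<otimes> r \<in> ?J +> (s \<otimes> r)" using coset_mem[OF rR J_zero[OF rR] sr] .
  ultimately have "s \<otimes> r \<in> ?J +> \<one>" using eq by blast
  then obtain h where "h \<in> ?J" "s \<otimes> r = h \<oplus> \<one>" unfolding coset_def2 by blast
  then show ?thesis using s by blast
qed


lemma left_ideal_iff:
  fixes R (structure)
  shows "left_ideal R K \<longleftrightarrow> (K \<subseteq> carrier R \<and> \<zero> \<in> K \<and> (\<forall>x\<in>K. \<forall>y\<in>K. x \<oplus> y \<in> K) \<and>
     (\<forall>x\<in>K. \<ominus> x \<in> K) \<and> (\<forall>r\<in>carrier R. \<forall>x\<in>K. r \<otimes> x \<in> K))"
  unfolding left_ideal_def additive_subgroup_def subgroup_def a_inv_def Ball_def by (simp, blast)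

lemma J_unit:
  fixes R (structure)
  assumes rR: "ring R" and t: "t \<in> jacobson R"
  shows "\<exists>a\<in>carrier R. a \<otimes> (\<one> \<ominus> t) = \<one>"
proof (rule ccontr)
  interpret ring R by fact
  assume H: "\<not> (\<exists>a\<in>carrier R. a \<otimes> (\<one> \<ominus> t) = \<one>)"
  have tR: "t \<in> carrier R" using subsetD[OF J_sub[of R] t] .
  define u where "u = \<one> \<ominus> t"
  have uR: "u \<in> carrier R" unfolding u_def using tR by simp
  define L0 where "L0 = {a \<otimes> u | a. a \<in> carrier R}"
  have L0mem: "x \<in> L0 \<longleftrightarrow> (\<exists>a\<in>carrier R. x = a \<otimes> u)" for x
    unfolding L0_def by blast
  have L0: "left_ideal R L0" unfolding left_ideal_iff
  proof (intro conjI ballI)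
    show "L0 \<subseteq> carrier R"
    proof
      fix x assume "x \<in> L0"
      then obtain a where "a \<in> carrier R" "x = a \<otimes> u" using L0mem by blast
      then show "x \<in> carrier R" using uR by simp
    qed
    have "\<zero> = \<zero> \<otimes> u" using uR by simp
    then show "\<zero> \<in> L0" using L0mem zero_closed by blast
    show "x \<oplus> y \<in> L0" if xy: "x \<in> L0" "y \<in> L0" for x y
    proof -
      obtain a where a: "a \<in> carrier R" "x = a \<otimes> u" using xy(1) L0mem by blast
      obtain b where b: "b \<in> carrier R" "y = b \<otimes> u" using xy(2) L0mem by blast
      have "x \<oplus> y = (a \<oplus> b) \<otimes> u" using a b uR by (simp add: l_distr)
      moreover have "a \<oplus> b \<in> carrier R" using a b by simp
      ultimately show ?thesis using L0mem by blast
    qed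
    show "\<ominus> x \<in> L0" if xy: "x \<in> L0" for x
    proof -
      obtain a where a: "a \<in> carrier R" "x = a \<otimes> u" using xy L0mem by blast
      have "\<ominus> x = (\<ominus> a) \<otimes> u" using a uR by (simp add: l_minus)
      moreover have "\<ominus> a \<in> carrier R" using a by simp
      ultimately show ?thesis using L0mem by blast
    qed
    show "r \<otimes> x \<in> L0" if xy: "r \<in> carrier R" "x \<in> L0" for r x
    proof -
      obtain a where a: "a \<in> carrier R" "x = a \<otimes> u" using xy(2) L0mem by blast
      have "r \<otimes> x = (r \<otimes> a) \<otimes> u" using a uR xy by (simp add: m_assoc)
      moreover have "r \<otimes> a \<in> carrier R" using a xy by simp
      ultimately show ?thesis using L0mem by blast
    qed
  qed
  have oneL0: "\<one> \<notin> L0" using H L0mem[of "\<one>"] unfolding u_def by auto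
  define A where "A = {K. left_ideal R K \<and> L0 \<subseteq> K \<and> \<one> \<notin> K}"
  have "\<exists>K\<in>A. \<forall>Kx\<in>A. K \<subseteq> Kx \<longrightarrow> Kx = K"
  proof (rule subset_Zorn_nonempty)
    show "A \<noteq> {}" unfolding A_def using L0 oneL0 by blast
    show "\<Union>C \<in> A" if C: "C \<noteq> {}" "subset.chain A C" for C
    proof -
      have CA: "C \<subseteq> A" and ch: "\<And>Kx Ky. Kx \<in> C \<Longrightarrow> Ky \<in> C \<Longrightarrow> Kx \<subseteq> Ky \<or> Ky \<subseteq> Kx"
        using C(2) unfolding subset_chain_def by blast+
      have li: "\<And>K. K \<in> C \<Longrightarrow> left_ideal R K" using CA unfolding A_def by blast
      note LI = li[unfolded left_ideal_iff]
      obtain K0 where K0: "K0 \<in> C" using C(1) by blast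
      have "left_ideal R (\<Union>C)" unfolding left_ideal_iff
      proof (intro conjI ballI)
        show "\<Union>C \<subseteq> carrier R" using LI by blast
        show "\<zero> \<in> \<Union>C" using LI[OF K0] K0 by blast
        show "x \<oplus> y \<in> \<Union>C" if xy: "x \<in> \<Union>C" "y \<in> \<Union>C" for x y
        proof -
          obtain Kx Ky where XY: "Kx \<in> C" "Ky \<in> C" "x \<in> Kx" "y \<in> Ky" using xy by blast
          show ?thesis
          proof (cases "Kx \<subseteq> Ky")
            case True then show ?thesis using XY LI[OF XY(2)] by blast
          next
            case False then have "Ky \<subseteq> Kx" using ch[OF XY(1,2)] by blast
            then show ?thesis using XY LI[OF XY(1)] by blast
          qed
        qed
        show "\<ominus> x \<in> \<Union>C" if "x \<in> \<Union>C" for x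
          using that LI by blast
        show "r \<otimes> x \<in> \<Union>C" if "r \<in> carrier R" "x \<in> \<Union>C" for r x
          using that LI by blast
      qed
      moreover have "L0 \<subseteq> \<Union>C" using CA K0 unfolding A_def by blast
      moreover have "\<one> \<notin> \<Union>C" using CA unfolding A_def by blast
      ultimately show ?thesis unfolding A_def by blast
    qed
  qed
  then obtain K where K: "K \<in> A" and Kmax: "\<And>Kx. Kx \<in> A \<Longrightarrow> K \<subseteq> Kx \<Longrightarrow> Kx = K" by blast
  have one_not: "\<one> \<notin> Kx" if "left_ideal R Kx" "Kx \<noteq> carrier R" for Kx
  proof
    assume o: "\<one> \<in> Kx"
    have "carrier R \<subseteq> Kx"
    proof
      fix r assume r: "r \<in> carrier R"
      then have "r \<otimes> \<one> \<in> Kx" using o that(1) unfolding left_ideal_iff by blast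
      then show "r \<in> Kx" using r by simp
    qed
    then show False using that unfolding left_ideal_iff by blast
  qed
  have "maximal_left_ideal R K" unfolding maximal_left_ideal_def
  proof (intro conjI allI impI)
    show "left_ideal R K" using K unfolding A_def by blast
    show "K \<noteq> carrier R" using K unfolding A_def by auto
    show "Kx = K" if "left_ideal R Kx \<and> K \<subseteq> Kx \<and> Kx \<noteq> carrier R" for Kx
    proof (rule Kmax)
      show "Kx \<in> A" using that one_not K unfolding A_def by blast
      show "K \<subseteq> Kx" using that by blast
    qed
  qed
  then have tK: "t \<in> K" using t unfolding jacobson_def by blast
  have "u \<in> K"
  proof -
    have "u = \<one> \<otimes> u" using uR by simp
    then have "u \<in> L0" using L0mem one_closed by blast
    then show ?thesis using K unfolding A_def by blast
  qed
  moreover have "u \<oplus> t = \<one>" unfolding u_def using tR by (simp add: a_minus_def a_assoc l_neg)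
  moreover have "left_ideal R K" using K unfolding A_def by blast
  ultimately have "\<one> \<in> K" using tK unfolding left_ideal_iff by metis
  then show False using K unfolding A_def by blast
qed


context lmod begin

lemma J_ann:
  assumes loc: "local_ring R" and ss: "semisimple R M" and j: "j \<in> jacobson R" and x: "x \<in> carrier M"
  shows "j \<odot>\<^bsub>M\<^esub> x = \<zero>\<^bsub>M\<^esub>"
proof -
  have jR: "j \<in> carrier R" using subsetD[OF J_sub[of R] j] .
  define v where "v = j \<odot>\<^bsub>M\<^esub> x"
  have vM: "v \<in> carrier M" unfolding v_def using jR x by simp
  define N where "N = lspan R M {v}"
  have Nsub: "lsubmodule R M N" unfolding N_def using lspan_lsub vM by blast
  have Neq: "N = {a \<odot>\<^bsub>M\<^esub> v | a. a \<in> carrier R}" unfolding N_def using lspan_single[OF vM] .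
  have "\<exists>N'. lsubmodule R M N' \<and> N \<inter> N' = {\<zero>\<^bsub>M\<^esub>} \<and>
           (\<forall>x\<in>carrier M. \<exists>u\<in>N. \<exists>v\<in>N'. x = u \<oplus>\<^bsub>M\<^esub> v)"
    using ss Nsub unfolding semisimple_def by simp
  then obtain N' where N': "lsubmodule R M N'" "N \<inter> N' = {\<zero>\<^bsub>M\<^esub>}"
    and dec0: "\<forall>x\<in>carrier M. \<exists>u\<in>N. \<exists>v\<in>N'. x = u \<oplus>\<^bsub>M\<^esub> v" by blast
  have dec: "\<exists>u\<in>N. \<exists>q\<in>N'. z = u \<oplus>\<^bsub>M\<^esub> q" if "z \<in> carrier M" for z
    using dec0 that by blast
  obtain u q where uq: "u \<in> N" "q \<in> N'" "x = u \<oplus>\<^bsub>M\<^esub> q" using dec[OF x] by blast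
  have uM: "u \<in> carrier M" using lsubD(1)[OF Nsub] uq by blast
  have qM: "q \<in> carrier M" using lsubD(1)[OF N'(1)] uq by blast
  have v2: "v = j \<odot>\<^bsub>M\<^esub> u \<oplus>\<^bsub>M\<^esub> j \<odot>\<^bsub>M\<^esub> q" unfolding v_def using uq uM qM jR by (simp add: sm_rdistr)
  have jq1: "j \<odot>\<^bsub>M\<^esub> q \<in> N'" using lsubD(5)[OF N'(1) jR uq(2)] .
  have ju: "j \<odot>\<^bsub>M\<^esub> u \<in> N" using lsubD(5)[OF Nsub jR uq(1)] .
  have vN: "v \<in> N" unfolding Neq using vM R.one_closed sm_one[OF vM] by (metis (mono_tags, lifting) mem_Collect_eq)
  have jq_eq: "j \<odot>\<^bsub>M\<^esub> q = \<ominus>\<^bsub>M\<^esub> (j \<odot>\<^bsub>M\<^esub> u) \<oplus>\<^bsub>M\<^esub> v"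
    using v2 jR uM qM by (simp add: M.a_assoc[symmetric] M.l_neg)
  have "\<ominus>\<^bsub>M\<^esub> (j \<odot>\<^bsub>M\<^esub> u) \<oplus>\<^bsub>M\<^esub> v \<in> N"
    using lsubD(3)[OF Nsub lsubD(4)[OF Nsub ju] vN] .
  then have "j \<odot>\<^bsub>M\<^esub> q \<in> N \<inter> N'" using jq1 jq_eq by simp
  then have jq0: "j \<odot>\<^bsub>M\<^esub> q = \<zero>\<^bsub>M\<^esub>" using N'(2) by blast
  obtain r where r: "r \<in> carrier R" "u = r \<odot>\<^bsub>M\<^esub> v" using uq(1) unfolding Neq by blast
  have "v = j \<odot>\<^bsub>M\<^esub> u" using v2 jq0 jR uM by simp
  also have "\<dots> = (j \<otimes>\<^bsub>R\<^esub> r) \<odot>\<^bsub>M\<^esub> v" using r jR vM by (simp add: sm_assoc)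
  finally have vt: "v = (j \<otimes>\<^bsub>R\<^esub> r) \<odot>\<^bsub>M\<^esub> v" .
  define t where "t = j \<otimes>\<^bsub>R\<^esub> r"
  have tJ: "t \<in> jacobson R" unfolding t_def using J_right[OF loc j r(1)] .
  have tR: "t \<in> carrier R" using subsetD[OF J_sub[of R] tJ] .
  obtain a where a: "a \<in> carrier R" "a \<otimes>\<^bsub>R\<^esub> (\<one>\<^bsub>R\<^esub> \<ominus>\<^bsub>R\<^esub> t) = \<one>\<^bsub>R\<^esub>"
    using J_unit[OF ringR tJ] by blast
  have "(\<one>\<^bsub>R\<^esub> \<ominus>\<^bsub>R\<^esub> t) \<odot>\<^bsub>M\<^esub> v = v \<oplus>\<^bsub>M\<^esub> (\<ominus>\<^bsub>M\<^esub> (t \<odot>\<^bsub>M\<^esub> v))"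
    using tR vM by (simp add: R.minus_eq sm_ldistr sm_uminus)
  also have "\<dots> = \<zero>\<^bsub>M\<^esub>" using vt[folded t_def] vM tR by (simp add: M.r_neg)
  finally have z: "(\<one>\<^bsub>R\<^esub> \<ominus>\<^bsub>R\<^esub> t) \<odot>\<^bsub>M\<^esub> v = \<zero>\<^bsub>M\<^esub>" .
  have "v = (a \<otimes>\<^bsub>R\<^esub> (\<one>\<^bsub>R\<^esub> \<ominus>\<^bsub>R\<^esub> t)) \<odot>\<^bsub>M\<^esub> v" using a vM by simp
  also have "\<dots> = a \<odot>\<^bsub>M\<^esub> ((\<one>\<^bsub>R\<^esub> \<ominus>\<^bsub>R\<^esub> t) \<odot>\<^bsub>M\<^esub> v)" using sm_assoc[OF a(1) _ vM, of "\<one>\<^bsub>R\<^esub> \<ominus>\<^bsub>R\<^esub> t"] tR by simp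
  also have "\<dots> = \<zero>\<^bsub>M\<^esub>" using z a by simp
  finally show ?thesis unfolding v_def .
qed

end

locale setting = lmod +
  assumes loc: "local_ring R" and ss: "semisimple R M"
begin

lemma ann: "j \<in> jacobson R \<Longrightarrow> x \<in> carrier M \<Longrightarrow> j \<odot>\<^bsub>M\<^esub> x = \<zero>\<^bsub>M\<^esub>"
  using J_ann[OF loc ss] by blast

lemma inv_sm:
  assumes r: "r \<in> carrier R" and nJ: "r \<notin> jacobson R"
  obtains s where "s \<in> carrier R" "\<And>x. x \<in> carrier M \<Longrightarrow> s \<odot>\<^bsub>M\<^esub> (r \<odot>\<^bsub>M\<^esub> x) = x"
proof -
  obtain s h where s: "s \<in> carrier R" "h \<in> jacobson R" "s \<otimes>\<^bsub>R\<^esub> r = h \<oplus>\<^bsub>R\<^esub> \<one>\<^bsub>R\<^esub>"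
    using J_F1[OF loc r nJ] by blast
  have hR: "h \<in> carrier R" using subsetD[OF J_sub[of R] s(2)] .
  have "s \<odot>\<^bsub>M\<^esub> (r \<odot>\<^bsub>M\<^esub> x) = x" if x: "x \<in> carrier M" for x
  proof -
    have "s \<odot>\<^bsub>M\<^esub> (r \<odot>\<^bsub>M\<^esub> x) = (s \<otimes>\<^bsub>R\<^esub> r) \<odot>\<^bsub>M\<^esub> x" using sm_assoc[OF s(1) r x] by simp
    also have "\<dots> = h \<odot>\<^bsub>M\<^esub> x \<oplus>\<^bsub>M\<^esub> x" using s(3) hR x by (simp add: sm_ldistr)
    also have "\<dots> = x" using ann[OF s(2) x] x by simp
    finally show ?thesis .
  qed
  then show ?thesis using that s(1) by blast
qed

lemma nonJ_inj:
  assumes r: "r \<in> carrier R" and x: "x \<in> carrier M" and z: "r \<odot>\<^bsub>M\<^esub> x = \<zero>\<^bsub>M\<^esub>" and nz: "x \<noteq> \<zero>\<^bsub>M\<^esub>"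
  shows "r \<in> jacobson R"
proof (rule ccontr)
  assume "r \<notin> jacobson R"
  then obtain s where s: "s \<in> carrier R" "\<And>x. x \<in> carrier M \<Longrightarrow> s \<odot>\<^bsub>M\<^esub> (r \<odot>\<^bsub>M\<^esub> x) = x"
    using inv_sm[OF r] by blast
  have "x = s \<odot>\<^bsub>M\<^esub> (r \<odot>\<^bsub>M\<^esub> x)" using s(2)[OF x] by simp
  also have "\<dots> = \<zero>\<^bsub>M\<^esub>" using z s(1) by simp
  finally show False using nz by simp
qed

lemma cover:
  assumes S: "S \<subseteq> carrier M" and z: "z \<in> carrier M" and L: "lsubmodule R M L"
    and l1: "lspan R M S \<subseteq> L" and l2: "L \<subseteq> lspan R M (insert z S)"
  shows "L = lspan R M S \<or> L = lspan R M (insert z S)"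
proof (cases "L = lspan R M S")
  case True then show ?thesis by blast
next
  case False
  then have ne: "L \<noteq> lspan R M S" .
  then obtain q where q: "q \<in> L" "q \<notin> lspan R M S" using l1 by blast
  have "q \<in> lspan R M (insert z S)" using q l2 by blast
  then obtain a u where au: "a \<in> carrier R" "u \<in> lspan R M S" "q = a \<odot>\<^bsub>M\<^esub> z \<oplus>\<^bsub>M\<^esub> u"
    unfolding lspan_insert[OF S z] by blast
  have P: "lsubmodule R M (lspan R M S)" using lspan_lsub[OF S] .
  have uM: "u \<in> carrier M" using lsubD(1)[OF P] au(2) by blast
  have azM: "a \<odot>\<^bsub>M\<^esub> z \<in> carrier M" using au z by simp
  have az: "a \<odot>\<^bsub>M\<^esub> z = q \<oplus>\<^bsub>M\<^esub> (\<ominus>\<^bsub>M\<^esub> u)" using au uM azM by (simp add: M.a_assoc M.r_neg)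
  have uL: "u \<in> L" using l1 au by blast
  have azL: "a \<odot>\<^bsub>M\<^esub> z \<in> L" unfolding az using lsubD(3)[OF L q(1) lsubD(4)[OF L uL]] .
  have "a \<notin> jacobson R"
  proof
    assume "a \<in> jacobson R"
    then have "a \<odot>\<^bsub>M\<^esub> z = \<zero>\<^bsub>M\<^esub>" using ann z by blast
    then have "q = u" using au uM by simp
    then show False using q au by simp
  qed
  then obtain s where s: "s \<in> carrier R" "\<And>x. x \<in> carrier M \<Longrightarrow> s \<odot>\<^bsub>M\<^esub> (a \<odot>\<^bsub>M\<^esub> x) = x"
    using inv_sm[OF au(1)] by blast
  have "z \<in> L" using lsubD(5)[OF L s(1) azL] s(2)[OF z] by simp
  then have "insert z S \<subseteq> L" using l1 lspan_incl[of S] by blast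
  then have "lspan R M (insert z S) \<subseteq> L" using lspan_least[OF L] by blast
  then show ?thesis using l2 by blast
qed

end

definition cser :: "('a,'c) ring_scheme \<Rightarrow> ('a,'b,'d) module_scheme \<Rightarrow> (nat \<Rightarrow> 'b set) \<Rightarrow> nat \<Rightarrow> 'b set \<Rightarrow> bool" where
  "cser R M N k P \<longleftrightarrow> (\<forall>i\<le>k. lsubmodule R M (N i)) \<and> N 0 = {\<zero>\<^bsub>M\<^esub>} \<and> N k = P \<and>
     (\<forall>i<k. N i \<subset> N (Suc i) \<and>
        \<not> (\<exists>L. lsubmodule R M L \<and> N i \<subset> L \<and> L \<subset> N (Suc i)))"

lemma cs_cser: "composition_series R M N k = cser R M N k (carrier M)"
  unfolding composition_series_def cser_def by simp

definition msum :: "('a,'b,'d) module_scheme \<Rightarrow> 'b set \<Rightarrow> 'b set \<Rightarrow> 'b set" where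
  "msum M N P = {u \<oplus>\<^bsub>M\<^esub> v | u v. u \<in> N \<and> v \<in> P}"

lemma msum_mem: "x \<in> msum M N P \<longleftrightarrow> (\<exists>u\<in>N. \<exists>v\<in>P. x = u \<oplus>\<^bsub>M\<^esub> v)"
  unfolding msum_def by blast

lemma chain_mono:
  assumes "\<And>i. i < m \<Longrightarrow> N i \<subseteq> N (Suc i)" "i \<le> j" "j \<le> m"
  shows "N i \<subseteq> N j"
  using assms(2,3)
proof (induction j)
  case 0 then show ?case by simp
next
  case (Suc j)
  show ?case
  proof (cases "i = Suc j")
    case True then show ?thesis by simp
  next
    case False
    then have "i \<le> j" using Suc.prems by simp
    then have "N i \<subseteq> N j" using Suc by simp
    also have "N j \<subseteq> N (Suc j)" using assms(1) Suc.prems by simp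
    finally show ?thesis .
  qed
qed

context lmod begin

lemma lsub_inter: "lsubmodule R M N \<Longrightarrow> lsubmodule R M P \<Longrightarrow> lsubmodule R M (N \<inter> P)"
  unfolding lsubmodule_def by blast

lemma lsub_sum:
  assumes N: "lsubmodule R M N" and P: "lsubmodule R M P"
  shows "lsubmodule R M (msum M N P)"
  unfolding lsubmodule_def
proof (intro conjI ballI)
  have NM: "N \<subseteq> carrier M" and PM: "P \<subseteq> carrier M" using lsubD(1) N P by auto
  show "msum M N P \<subseteq> carrier M"
  proof
    fix x assume "x \<in> msum M N P"
    then obtain u v where "u \<in> N" "v \<in> P" "x = u \<oplus>\<^bsub>M\<^esub> v" unfolding msum_mem by blast
    then show "x \<in> carrier M" using NM PM by (metis M.add.m_closed subsetD)
  qed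
  have "\<zero>\<^bsub>M\<^esub> = \<zero>\<^bsub>M\<^esub> \<oplus>\<^bsub>M\<^esub> \<zero>\<^bsub>M\<^esub>" by simp
  then show "\<zero>\<^bsub>M\<^esub> \<in> msum M N P" unfolding msum_mem using lsubD(2)[OF N] lsubD(2)[OF P] by blast
  show "x \<oplus>\<^bsub>M\<^esub> y \<in> msum M N P" if xy: "x \<in> msum M N P" "y \<in> msum M N P" for x y
  proof -
    obtain u v where uv: "u \<in> N" "v \<in> P" "x = u \<oplus>\<^bsub>M\<^esub> v" using xy(1) unfolding msum_mem by blast
    obtain u' v' where uv': "u' \<in> N" "v' \<in> P" "y = u' \<oplus>\<^bsub>M\<^esub> v'" using xy(2) unfolding msum_mem by blast
    have c: "u \<in> carrier M" "v \<in> carrier M" "u' \<in> carrier M" "v' \<in> carrier M" using uv uv' NM PM by auto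
    have "x \<oplus>\<^bsub>M\<^esub> y = (u \<oplus>\<^bsub>M\<^esub> u') \<oplus>\<^bsub>M\<^esub> (v \<oplus>\<^bsub>M\<^esub> v')" using uv uv' c by (simp add: M.a_ac)
    moreover have "u \<oplus>\<^bsub>M\<^esub> u' \<in> N" using lsubD(3)[OF N uv(1) uv'(1)] .
    moreover have "v \<oplus>\<^bsub>M\<^esub> v' \<in> P" using lsubD(3)[OF P uv(2) uv'(2)] .
    ultimately show ?thesis unfolding msum_mem by blast
  qed
  show "\<ominus>\<^bsub>M\<^esub> x \<in> msum M N P" if xy: "x \<in> msum M N P" for x
  proof -
    obtain u v where uv: "u \<in> N" "v \<in> P" "x = u \<oplus>\<^bsub>M\<^esub> v" using xy(1) unfolding msum_mem by blast
    have c: "u \<in> carrier M" "v \<in> carrier M" using uv NM PM by auto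
    have "\<ominus>\<^bsub>M\<^esub> x = (\<ominus>\<^bsub>M\<^esub> u) \<oplus>\<^bsub>M\<^esub> (\<ominus>\<^bsub>M\<^esub> v)" using uv c by (simp add: M.minus_add)
    moreover have "\<ominus>\<^bsub>M\<^esub> u \<in> N" using lsubD(4)[OF N uv(1)] .
    moreover have "\<ominus>\<^bsub>M\<^esub> v \<in> P" using lsubD(4)[OF P uv(2)] .
    ultimately show ?thesis unfolding msum_mem by blast
  qed
  show "a \<odot>\<^bsub>M\<^esub> x \<in> msum M N P" if xy: "a \<in> carrier R" "x \<in> msum M N P" for a x
  proof -
    obtain u v where uv: "u \<in> N" "v \<in> P" "x = u \<oplus>\<^bsub>M\<^esub> v" using xy(2) unfolding msum_mem by blast
    have c: "u \<in> carrier M" "v \<in> carrier M" using uv NM PM by auto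
    have "a \<odot>\<^bsub>M\<^esub> x = a \<odot>\<^bsub>M\<^esub> u \<oplus>\<^bsub>M\<^esub> a \<odot>\<^bsub>M\<^esub> v" using uv c xy by (simp add: sm_rdistr)
    moreover have "a \<odot>\<^bsub>M\<^esub> u \<in> N" using lsubD(5)[OF N xy(1) uv(1)] .
    moreover have "a \<odot>\<^bsub>M\<^esub> v \<in> P" using lsubD(5)[OF P xy(1) uv(2)] .
    ultimately show ?thesis unfolding msum_mem by blast
  qed
qed

lemma msum_left: assumes "lsubmodule R M N" "lsubmodule R M P" shows "N \<subseteq> msum M N P"
proof
  fix x assume x: "x \<in> N"
  then have "x = x \<oplus>\<^bsub>M\<^esub> \<zero>\<^bsub>M\<^esub>" using lsubD(1)[OF assms(1)] by auto
  then show "x \<in> msum M N P" unfolding msum_mem using x lsubD(2)[OF assms(2)] by blast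
qed

lemma msum_right: assumes "lsubmodule R M N" "lsubmodule R M P" shows "P \<subseteq> msum M N P"
proof
  fix x assume x: "x \<in> P"
  then have "x = \<zero>\<^bsub>M\<^esub> \<oplus>\<^bsub>M\<^esub> x" using lsubD(1)[OF assms(2)] by auto
  then show "x \<in> msum M N P" unfolding msum_mem using x lsubD(2)[OF assms(1)] by blast
qed

lemma msum_least: assumes "lsubmodule R M Q" "N \<subseteq> Q" "P \<subseteq> Q" shows "msum M N P \<subseteq> Q"
proof
  fix x assume "x \<in> msum M N P"
  then obtain u v where "u \<in> N" "v \<in> P" "x = u \<oplus>\<^bsub>M\<^esub> v" unfolding msum_mem by blast
  then show "x \<in> Q" using lsubD(3)[OF assms(1)] assms(2,3) by blast
qed

lemma msum_mono: assumes "lsubmodule R M P" "N \<subseteq> N'" shows "msum M N P \<subseteq> msum M N' P"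
proof
  fix x assume "x \<in> msum M N P"
  then obtain u v where "u \<in> N" "v \<in> P" "x = u \<oplus>\<^bsub>M\<^esub> v" unfolding msum_mem by blast
  then show "x \<in> msum M N' P" unfolding msum_mem using assms(2) by blast
qed

end

context setting begin

lemma cser_exists:
  "set zs \<subseteq> carrier M \<Longrightarrow> \<exists>N k. k \<le> length zs \<and> cser R M N k (lspan R M (set zs))"
proof (induction zs)
  case Nil
  have "cser R M (\<lambda>_. {\<zero>\<^bsub>M\<^esub>}) 0 (lspan R M (set []))"
    unfolding cser_def using lsub_zero lspan_empty by simp
  then show ?case by auto
next
  case (Cons z zs)
  have S: "set zs \<subseteq> carrier M" and z: "z \<in> carrier M" using Cons.prems by auto
  obtain N k where k: "k \<le> length zs" and c: "cser R M N k (lspan R M (set zs))"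
    using Cons.IH[OF S] by blast
  let ?P = "lspan R M (set zs)"
  let ?P2 = "lspan R M (insert z (set zs))"
  have sz: "set (z # zs) = insert z (set zs)" by simp
  show ?case
  proof (cases "?P2 = ?P")
    case True
    then show ?thesis using c k unfolding sz by (intro exI[of _ N] exI[of _ k]) simp
  next
    case False
    have iS: "insert z (set zs) \<subseteq> carrier M" using S z by blast
    have sub: "?P \<subseteq> ?P2" using lspan_mono[OF iS] by blast
    define N' where "N' = N(Suc k := ?P2)"
    have c1: "\<forall>i\<le>k. lsubmodule R M (N i)" and c2: "N 0 = {\<zero>\<^bsub>M\<^esub>}" and c3: "N k = ?P"
      and c4: "\<forall>i<k. N i \<subset> N (Suc i) \<and> \<not> (\<exists>L. lsubmodule R M L \<and> N i \<subset> L \<and> L \<subset> N (Suc i))"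
      using c unfolding cser_def by blast+
    have "cser R M N' (Suc k) ?P2" unfolding cser_def
    proof (intro conjI allI impI)
      show "lsubmodule R M (N' i)" if "i \<le> Suc k" for i
      proof (cases "i = Suc k")
        case True then show ?thesis unfolding N'_def using lspan_lsub[OF iS] by simp
      next
        case False then show ?thesis unfolding N'_def using c1 that by simp
      qed
      show "N' 0 = {\<zero>\<^bsub>M\<^esub>}" unfolding N'_def using c2 by simp
      show "N' (Suc k) = ?P2" unfolding N'_def by simp
      show "N' i \<subset> N' (Suc i)" if "i < Suc k" for i
      proof (cases "i = k")
        case True then show ?thesis unfolding N'_def using c3 sub False by auto
      next
        case False then show ?thesis unfolding N'_def using c4 that by simp
      qed
      show "\<not> (\<exists>L. lsubmodule R M L \<and> N' i \<subset> L \<and> L \<subset> N' (Suc i))" if "i < Suc k" for i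
      proof (cases "i = k")
        case True
        show ?thesis
        proof
          assume "\<exists>L. lsubmodule R M L \<and> N' i \<subset> L \<and> L \<subset> N' (Suc i)"
          then obtain L where L: "lsubmodule R M L" "?P \<subset> L" "L \<subset> ?P2"
            unfolding N'_def using True c3 by auto
          have "L = ?P \<or> L = ?P2" using cover[OF S z L(1)] L(2,3) by blast
          then show False using L by blast
        qed
      next
        case False then show ?thesis unfolding N'_def using c4 that by simp
      qed
    qed
    then show ?thesis unfolding sz using k by (intro exI[of _ N'] exI[of _ "Suc k"]) simp
  qed
qed

lemma chain_bound:
  "set zs \<subseteq> carrier M \<Longrightarrow> (\<And>i. i \<le> m \<Longrightarrow> lsubmodule R M (N i)) \<Longrightarrow>
   (\<And>i. i < m \<Longrightarrow> N i \<subseteq> N (Suc i)) \<Longrightarrow> N m \<subseteq> lspan R M (set zs) \<Longrightarrow>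
   card {i. i < m \<and> N i \<noteq> N (Suc i)} \<le> length zs"
proof (induction zs arbitrary: N)
  case Nil
  have "N i = {\<zero>\<^bsub>M\<^esub>}" if "i \<le> m" for i
  proof -
    have "N i \<subseteq> N m" using chain_mono[of m N i m] Nil.prems(3) that by blast
    then have "N i \<subseteq> {\<zero>\<^bsub>M\<^esub>}" using Nil.prems(4) lspan_empty by simp
    then show ?thesis using lsubD(2)[OF Nil.prems(2)[OF that]] by blast
  qed
  then have "{i. i < m \<and> N i \<noteq> N (Suc i)} = {}" by fastforce
  then show ?case by simp
next
  case (Cons z zs)
  have S: "set zs \<subseteq> carrier M" and z: "z \<in> carrier M" using Cons.prems by auto
  have iS: "insert z (set zs) \<subseteq> carrier M" using S z by blast
  let ?P' = "lspan R M (set zs)"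
  let ?P = "lspan R M (insert z (set zs))"
  have P'sub: "lsubmodule R M ?P'" using lspan_lsub[OF S] .
  have Psub: "lsubmodule R M ?P" using lspan_lsub[OF iS] .
  have P'P: "?P' \<subseteq> ?P" using lspan_mono[OF iS] by blast
  have Nm: "N m \<subseteq> ?P" using Cons.prems(4) by simp
  have NiP: "N i \<subseteq> ?P" if "i \<le> m" for i
    using chain_mono[of m N i m] Cons.prems(3) that Nm by blast
  define A where "A i = N i \<inter> ?P'" for i
  define B where "B i = msum M (N i) ?P'" for i
  have DA: "card {i. i < m \<and> A i \<noteq> A (Suc i)} \<le> length zs"
  proof (rule Cons.IH[OF S])
    show "lsubmodule R M (A i)" if "i \<le> m" for i unfolding A_def using lsub_inter[OF Cons.prems(2)[OF that] P'sub] .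
    show "A i \<subseteq> A (Suc i)" if "i < m" for i unfolding A_def using Cons.prems(3)[OF that] by blast
    show "A m \<subseteq> ?P'" unfolding A_def by blast
  qed
  have Bmono: "B i \<subseteq> B (Suc i)" if "i < m" for i
    unfolding B_def using msum_mono[OF P'sub Cons.prems(3)[OF that]] .
  have Bcase: "B i = ?P' \<or> B i = ?P" if "i \<le> m" for i
  proof (rule cover[OF S z])
    show "lsubmodule R M (B i)" unfolding B_def using lsub_sum[OF Cons.prems(2)[OF that] P'sub] .
    show "?P' \<subseteq> B i" unfolding B_def using msum_right[OF Cons.prems(2)[OF that] P'sub] .
    show "B i \<subseteq> ?P" unfolding B_def using msum_least[OF Psub NiP[OF that] P'P] .
  qed
  have Bstep: "B i = ?P' \<and> B (Suc i) = ?P \<and> ?P' \<noteq> ?P" if "i < m" "B i \<noteq> B (Suc i)" for i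
  proof -
    have "B i = ?P' \<or> B i = ?P" "B (Suc i) = ?P' \<or> B (Suc i) = ?P" using Bcase that by auto
    moreover have "B i \<subseteq> B (Suc i)" using Bmono that by blast
    ultimately show ?thesis using that(2) P'P by blast
  qed
  have DB: "card {i. i < m \<and> B i \<noteq> B (Suc i)} \<le> 1"
  proof -
    have "i = i'" if "i \<in> {i. i < m \<and> B i \<noteq> B (Suc i)}" "i' \<in> {i. i < m \<and> B i \<noteq> B (Suc i)}" for i i'
    proof (rule ccontr)
      assume "i \<noteq> i'"
      then consider "i < i'" | "i' < i" by linarith
      then show False
      proof cases
        case 1
        have s1: "B i = ?P' \<and> B (Suc i) = ?P \<and> ?P' \<noteq> ?P" using Bstep that(1) by blast
        have s2: "B i' = ?P' \<and> B (Suc i') = ?P" using Bstep that(2) by blast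
        have "B (Suc i) \<subseteq> B i'" using chain_mono[of m B "Suc i" i'] Bmono 1 that(2) by auto
        then show False using s1 s2 P'P by blast
      next
        case 2
        have s1: "B i' = ?P' \<and> B (Suc i') = ?P \<and> ?P' \<noteq> ?P" using Bstep that(2) by blast
        have s2: "B i = ?P' \<and> B (Suc i) = ?P" using Bstep that(1) by blast
        have "B (Suc i') \<subseteq> B i" using chain_mono[of m B "Suc i'" i] Bmono 2 that(1) by auto
        then show False using s1 s2 P'P by blast
      qed
    qed
    then show ?thesis using card_le_Suc0_iff_eq[of "{i. i < m \<and> B i \<noteq> B (Suc i)}"] by auto
  qed
  have modular: "{i. i < m \<and> N i \<noteq> N (Suc i)} \<subseteq> {i. i < m \<and> A i \<noteq> A (Suc i)} \<union> {i. i < m \<and> B i \<noteq> B (Suc i)}"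
  proof
    fix i assume i: "i \<in> {i. i < m \<and> N i \<noteq> N (Suc i)}"
    show "i \<in> {i. i < m \<and> A i \<noteq> A (Suc i)} \<union> {i. i < m \<and> B i \<noteq> B (Suc i)}"
    proof (rule ccontr)
      assume "\<not> ?thesis"
      then have eA: "A i = A (Suc i)" and eB: "B i = B (Suc i)" using i by auto
      have im: "i < m" using i by blast
      have Ni: "lsubmodule R M (N i)" and NS: "lsubmodule R M (N (Suc i))" using Cons.prems(2) im by auto
      have "N (Suc i) \<subseteq> N i"
      proof
        fix x assume x: "x \<in> N (Suc i)"
        have "x \<in> B (Suc i)" unfolding B_def using msum_left[OF NS P'sub] x by blast
        then have "x \<in> B i" using eB by simp
        then obtain u v where uv: "u \<in> N i" "v \<in> ?P'" "x = u \<oplus>\<^bsub>M\<^esub> v" unfolding B_def msum_mem by blast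
        have uS: "u \<in> N (Suc i)" using uv Cons.prems(3)[OF im] by blast
        have c: "u \<in> carrier M" "v \<in> carrier M" using uv lsubD(1)[OF Ni] lsubD(1)[OF P'sub] by auto
        have "v = (\<ominus>\<^bsub>M\<^esub> u) \<oplus>\<^bsub>M\<^esub> x" using uv c by (simp add: M.a_assoc[symmetric] M.l_neg)
        then have "v \<in> N (Suc i)" using lsubD(3)[OF NS lsubD(4)[OF NS uS] x] by simp
        then have "v \<in> A (Suc i)" unfolding A_def using uv by blast
        then have "v \<in> N i" using eA unfolding A_def by blast
        then show "x \<in> N i" using uv lsubD(3)[OF Ni] by blast
      qed
      then show False using i Cons.prems(3)[OF im] by blast
    qed
  qed
  have "card {i. i < m \<and> N i \<noteq> N (Suc i)} \<le> card ({i. i < m \<and> A i \<noteq> A (Suc i)} \<union> {i. i < m \<and> B i \<noteq> B (Suc i)})"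
    by (rule card_mono[OF _ modular]) auto
  also have "\<dots> \<le> card {i. i < m \<and> A i \<noteq> A (Suc i)} + card {i. i < m \<and> B i \<noteq> B (Suc i)}"
    by (rule card_Un_le)
  also have "\<dots> \<le> length (z # zs)" using DA DB by simp
  finally show ?case .
qed

end

context setting begin

lemma cser_gen:
  assumes c: "cser R M N k P"
  shows "\<exists>y. y ` {1..k} \<subseteq> carrier M \<and> lspan R M (y ` {1..k}) = P"
proof -
  have c1: "\<forall>i\<le>k. lsubmodule R M (N i)" and c2: "N 0 = {\<zero>\<^bsub>M\<^esub>}" and c3: "N k = P"
    and c4: "\<forall>i<k. N i \<subset> N (Suc i) \<and> \<not> (\<exists>L. lsubmodule R M L \<and> N i \<subset> L \<and> L \<subset> N (Suc i))"
    using c unfolding cser_def by blast+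
  define y where "y i = (SOME x. x \<in> N i \<and> x \<notin> N (i - 1))" for i
  have yN: "y (Suc i) \<in> N (Suc i) \<and> y (Suc i) \<notin> N i" if "i < k" for i
  proof -
    have "\<exists>x. x \<in> N (Suc i) \<and> x \<notin> N i" using c4 that by blast
    then show ?thesis unfolding y_def using someI_ex[of "\<lambda>x. x \<in> N (Suc i) \<and> x \<notin> N (Suc i - 1)"] by simp
  qed
  have yM: "y j \<in> carrier M" if jk: "j \<in> {1..k}" for j
  proof -
    obtain i where i: "j = Suc i" "i < k" using jk by (cases j) auto
    then show ?thesis using yN[OF i(2)] lsubD(1)[of "N (Suc i)"] c1 by auto
  qed
  have "i \<le> k \<Longrightarrow> lspan R M (y ` {1..i}) = N i" for i
  proof (induction i)
    case 0 then show ?case using c2 lspan_empty by simp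
  next
    case (Suc i)
    have ik: "i < k" using Suc.prems by simp
    have S: "y ` {1..i} \<subseteq> carrier M" using yM ik by auto
    have z: "y (Suc i) \<in> carrier M" using yM ik by auto
    have IH: "lspan R M (y ` {1..i}) = N i" using Suc ik by simp
    have ins: "y ` {1..Suc i} = insert (y (Suc i)) (y ` {1..i})"
      by (simp add: atLeastAtMostSuc_conv)
    have NS: "lsubmodule R M (N (Suc i))" using c1 ik by simp
    have Ni_sub: "N i \<subseteq> N (Suc i)" using c4 ik by blast
    have "insert (y (Suc i)) (y ` {1..i}) \<subseteq> N (Suc i)"
      using yN[OF ik] Ni_sub IH lspan_incl[of "y ` {1..i}"] by blast
    then have le: "lspan R M (insert (y (Suc i)) (y ` {1..i})) \<subseteq> N (Suc i)"
      using lspan_least[OF NS] by blast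
    have iS: "insert (y (Suc i)) (y ` {1..i}) \<subseteq> carrier M" using S z by blast
    have ge: "N i \<subset> lspan R M (insert (y (Suc i)) (y ` {1..i}))"
    proof -
      have "N i \<subseteq> lspan R M (insert (y (Suc i)) (y ` {1..i}))"
        using IH lspan_mono[OF iS] by blast
      moreover have "y (Suc i) \<in> lspan R M (insert (y (Suc i)) (y ` {1..i}))"
        using lspan_incl by blast
      ultimately show ?thesis using yN[OF ik] by blast
    qed
    have L: "lsubmodule R M (lspan R M (insert (y (Suc i)) (y ` {1..i})))" using lspan_lsub[OF iS] .
    have "lspan R M (insert (y (Suc i)) (y ` {1..i})) = N (Suc i)"
      using c4 ik L ge le by blast
    then show ?case using ins by simp
  qed
  then have "lspan R M (y ` {1..k}) = P" using c3 by simp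
  moreover have "y ` {1..k} \<subseteq> carrier M" using yM by blast
  ultimately show ?thesis by blast
qed

lemma cser_card: "cser R M N k P \<Longrightarrow> card {i. i < k \<and> N i \<noteq> N (Suc i)} = k"
proof -
  assume "cser R M N k P"
  then have "{i. i < k \<and> N i \<noteq> N (Suc i)} = {..<k}" unfolding cser_def by auto
  then show ?thesis by simp
qed

lemma cser_le:
  assumes c: "cser R M N k (carrier M)" and c': "cser R M N' k' (carrier M)"
  shows "k' \<le> k"
proof -
  obtain y where y: "y ` {1..k} \<subseteq> carrier M" "lspan R M (y ` {1..k}) = carrier M"
    using cser_gen[OF c] by blast
  define zs where "zs = map y [1..<Suc k]"
  have szs: "set zs = y ` {1..k}" unfolding zs_def by auto
  have lzs: "length zs = k" unfolding zs_def by simp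
  have "card {i. i < k' \<and> N' i \<noteq> N' (Suc i)} \<le> length zs"
  proof (rule chain_bound)
    show "set zs \<subseteq> carrier M" using szs y by simp
    show "lsubmodule R M (N' i)" if "i \<le> k'" for i using c' that unfolding cser_def by blast
    show "N' i \<subseteq> N' (Suc i)" if "i < k'" for i using c' that unfolding cser_def by blast
    show "N' k' \<subseteq> lspan R M (set zs)" using c' y szs unfolding cser_def by simp
  qed
  then show ?thesis using cser_card[OF c'] lzs by simp
qed

lemma comp_length_eq:
  assumes c: "cser R M N k (carrier M)"
  shows "comp_length R M = k"
  unfolding comp_length_def cs_cser
proof (rule the_equality)
  show "\<exists>N. cser R M N k (carrier M)" using c by blast
  show "k' = k" if "\<exists>N. cser R M N k' (carrier M)" for k'
    using that cser_le[OF c] cser_le[OF _ c] by (meson le_antisym)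
qed

lemma gen_set:
  assumes fg: "finitely_generated R M"
  shows "\<exists>y. generates R M (y ` {1..comp_length R M})"
proof -
  obtain S where S: "finite S" "generates R M S" using fg unfolding finitely_generated_def by blast
  obtain zs where zs: "set zs = S" using finite_list[OF S(1)] by blast
  have SM: "S \<subseteq> carrier M" "lspan R M S = carrier M" using S(2) unfolding generates_def by auto
  obtain N k where "cser R M N k (lspan R M (set zs))" using cser_exists SM zs by blast
  then have c: "cser R M N k (carrier M)" using SM zs by simp
  obtain y where "y ` {1..k} \<subseteq> carrier M" "lspan R M (y ` {1..k}) = carrier M"
    using cser_gen[OF c] by blast
  then show ?thesis unfolding comp_length_eq[OF c] generates_def by blast
qed

end

context lmod begin

lemma ag_sub_eq: "a \<in> carrier M \<Longrightarrow> b \<in> carrier M \<Longrightarrow> a \<oplus>\<^bsub>M\<^esub> \<ominus>\<^bsub>M\<^esub> b = \<zero>\<^bsub>M\<^esub> \<Longrightarrow> a = b"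
  by (metis M.minus_equality M.minus_minus M.a_comm M.a_inv_closed)

lemma ag_move:
  assumes "a \<in> carrier M" "b \<in> carrier M" "c \<in> carrier M" "d \<in> carrier M" "a \<oplus>\<^bsub>M\<^esub> b = c \<oplus>\<^bsub>M\<^esub> d"
  shows "a \<oplus>\<^bsub>M\<^esub> \<ominus>\<^bsub>M\<^esub> c = d \<oplus>\<^bsub>M\<^esub> \<ominus>\<^bsub>M\<^esub> b"
proof -
  have "a \<oplus>\<^bsub>M\<^esub> \<ominus>\<^bsub>M\<^esub> c = (a \<oplus>\<^bsub>M\<^esub> b) \<oplus>\<^bsub>M\<^esub> (\<ominus>\<^bsub>M\<^esub> b \<oplus>\<^bsub>M\<^esub> \<ominus>\<^bsub>M\<^esub> c)"
    using assms(1-4) by (simp add: M.a_assoc M.r_neg2)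
  also have "\<dots> = (c \<oplus>\<^bsub>M\<^esub> d) \<oplus>\<^bsub>M\<^esub> (\<ominus>\<^bsub>M\<^esub> b \<oplus>\<^bsub>M\<^esub> \<ominus>\<^bsub>M\<^esub> c)" using assms by simp
  also have "\<dots> = c \<oplus>\<^bsub>M\<^esub> (\<ominus>\<^bsub>M\<^esub> c \<oplus>\<^bsub>M\<^esub> (d \<oplus>\<^bsub>M\<^esub> \<ominus>\<^bsub>M\<^esub> b))"
    using assms(1-4) by (simp add: M.a_ac)
  also have "\<dots> = d \<oplus>\<^bsub>M\<^esub> \<ominus>\<^bsub>M\<^esub> b" using assms(1-4) by (simp only: M.r_neg2 M.a_inv_closed M.add.m_closed)
  finally show ?thesis .
qed

lemma cent_iff: "\<psi> \<in> centralizer R M \<alpha> \<longleftrightarrow> \<psi> \<in> End R M \<and> (\<forall>x\<in>carrier M. \<psi> (\<alpha> x) = \<alpha> (\<psi> x))"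
  unfolding centralizer_def by blast

lemma comm_sum:
  assumes psi: "\<psi> \<in> End R M" and phi: "\<phi> \<in> End R M"
    and c: "\<And>z. z \<in> carrier M \<Longrightarrow> \<psi> (\<phi> z) = \<phi> (\<psi> z)"
    and A: "finite A" and a: "\<And>i. i \<in> A \<Longrightarrow> a i \<in> carrier R" and v: "v \<in> carrier M"
  shows "\<psi> (\<Oplus>\<^bsub>M\<^esub>i\<in>A. a i \<odot>\<^bsub>M\<^esub> (\<phi> ^^ h i) v) = (\<Oplus>\<^bsub>M\<^esub>i\<in>A. a i \<odot>\<^bsub>M\<^esub> (\<phi> ^^ h i) (\<psi> v))"
proof -
  have pv: "(\<phi> ^^ k) v \<in> carrier M" for k using EndD(1)[OF End_pow[OF phi] v] .
  have "\<psi> (\<Oplus>\<^bsub>M\<^esub>i\<in>A. a i \<odot>\<^bsub>M\<^esub> (\<phi> ^^ h i) v) = (\<Oplus>\<^bsub>M\<^esub>i\<in>A. \<psi> (a i \<odot>\<^bsub>M\<^esub> (\<phi> ^^ h i) v))"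
    using End_finsum[OF psi A] a pv by auto
  also have "\<dots> = (\<Oplus>\<^bsub>M\<^esub>i\<in>A. a i \<odot>\<^bsub>M\<^esub> (\<phi> ^^ h i) (\<psi> v))"
  proof (rule M.finsum_cong')
    show "A = A" ..
    have pv2: "(\<phi> ^^ k) (\<psi> v) \<in> carrier M" for k using EndD(1)[OF End_pow[OF phi] EndD(1)[OF psi v]] .
    show "(\<lambda>i. a i \<odot>\<^bsub>M\<^esub> (\<phi> ^^ h i) (\<psi> v)) \<in> A \<rightarrow> carrier M" using a pv2 by auto
    show "\<psi> (a i \<odot>\<^bsub>M\<^esub> (\<phi> ^^ h i) v) = a i \<odot>\<^bsub>M\<^esub> (\<phi> ^^ h i) (\<psi> v)" if "i \<in> A" for i
      using EndD(3)[OF psi a[OF that] pv] End_pow_comm[OF psi phi c v] by simp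
  qed
  finally show ?thesis .
qed

end

locale nilp = setting +
  fixes \<phi> and n :: nat
  assumes phiE: "\<phi> \<in> End R M" and nil: "nilpotent_index M \<phi> n"
begin

lemma powE: "\<phi> ^^ k \<in> End R M" using End_pow[OF phiE] .
lemma pow_closed: "x \<in> carrier M \<Longrightarrow> (\<phi> ^^ k) x \<in> carrier M" using EndD(1)[OF powE] .

lemma n_pos: "0 < n"
proof (rule ccontr)
  assume "\<not> 0 < n"
  then have "n = 0" by simp
  then show False using nil unfolding nilpotent_index_def by force
qed

lemma pow_big: assumes x: "x \<in> carrier M" and k: "n \<le> k" shows "(\<phi> ^^ k) x = \<zero>\<^bsub>M\<^esub>"
proof -
  have "(\<phi> ^^ k) x = (\<phi> ^^ (k - n)) ((\<phi> ^^ n) x)"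
    using k by (metis funpow_add le_add_diff_inverse2 o_apply)
  also have "\<dots> = \<zero>\<^bsub>M\<^esub>" using nil x End_zero[OF powE] unfolding nilpotent_index_def by simp
  finally show ?thesis .
qed

lemma w0_ex: "\<exists>w0\<in>carrier M. (\<phi> ^^ (n - 1)) w0 \<noteq> \<zero>\<^bsub>M\<^esub>"
  using nil unfolding nilpotent_index_def by blast

end

locale nilpw = nilp +
  fixes w0 assumes w0: "w0 \<in> carrier M" and w0nz: "(\<phi> ^^ (n - 1)) w0 \<noteq> \<zero>\<^bsub>M\<^esub>"
begin

definition Gs where "Gs t = {(\<phi> ^^ k) w0 | k. t \<le> k \<and> k < n - 1}"

lemma Gs_carrier: "Gs t \<subseteq> carrier M" unfolding Gs_def using pow_closed w0 by auto

lemma not_in_aux: "n - 1 - t = d \<Longrightarrow> t \<le> n - 1 \<Longrightarrow> (\<phi> ^^ (n - 1)) w0 \<notin> lspan R M (Gs t)"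
proof (induction d arbitrary: t)
  case 0
  then have "Gs t = {}" unfolding Gs_def by auto
  then show ?case using w0nz lspan_empty by simp
next
  case (Suc d)
  let ?w = "(\<phi> ^^ (n - 1)) w0"
  have tl: "t < n - 1" using Suc.prems by simp
  have IH: "?w \<notin> lspan R M (Gs (Suc t))" using Suc.IH[of "Suc t"] Suc.prems by simp
  have ins: "Gs t = insert ((\<phi> ^^ t) w0) (Gs (Suc t))"
  proof (intro equalityI subsetI)
    fix y assume "y \<in> Gs t"
    then obtain k where k: "t \<le> k" "k < n - 1" "y = (\<phi> ^^ k) w0" unfolding Gs_def by blast
    show "y \<in> insert ((\<phi> ^^ t) w0) (Gs (Suc t))"
    proof (cases "k = t")
      case True then show ?thesis using k by simp
    next
      case False then have "Suc t \<le> k" using k by simp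
      then have "y \<in> Gs (Suc t)" unfolding Gs_def using k by blast
      then show ?thesis by simp
    qed
  next
    fix y assume y: "y \<in> insert ((\<phi> ^^ t) w0) (Gs (Suc t))"
    show "y \<in> Gs t"
    proof (cases "y = (\<phi> ^^ t) w0")
      case True then show ?thesis unfolding Gs_def using tl by blast
    next
      case False then have "y \<in> Gs (Suc t)" using y by simp
      then obtain k where k: "Suc t \<le> k" "k < n - 1" "y = (\<phi> ^^ k) w0" unfolding Gs_def by blast
      then show ?thesis unfolding Gs_def by (intro CollectI exI[of _ k]) simp
    qed
  qed
  have wM: "?w \<in> carrier M" using pow_closed w0 by blast
  have tM: "(\<phi> ^^ t) w0 \<in> carrier M" using pow_closed w0 by blast
  show ?case
  proof
    assume "?w \<in> lspan R M (Gs t)"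
    then obtain c u where cu: "c \<in> carrier R" "u \<in> lspan R M (Gs (Suc t))" "?w = c \<odot>\<^bsub>M\<^esub> (\<phi> ^^ t) w0 \<oplus>\<^bsub>M\<^esub> u"
      unfolding ins lspan_insert[OF Gs_carrier tM] by blast
    have uM: "u \<in> carrier M" using cu(2) lspan_carrier[OF Gs_carrier] by blast
    show False
    proof (cases "c \<in> jacobson R")
      case True
      then have "c \<odot>\<^bsub>M\<^esub> (\<phi> ^^ t) w0 = \<zero>\<^bsub>M\<^esub>" using ann tM by blast
      then have "?w = u" using cu uM by simp
      then show False using IH cu by simp
    next
      case False
      define g where "g = \<phi> ^^ (n - 1 - t)"
      have gE: "g \<in> End R M" unfolding g_def using powE .
      have gpow: "g ((\<phi> ^^ k) x) = (\<phi> ^^ (n - 1 - t + k)) x" for k x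
        unfolding g_def by (simp add: funpow_add)
      have "g ?w = \<zero>\<^bsub>M\<^esub>" unfolding gpow using pow_big[OF w0] tl by simp
      moreover have "g ?w = c \<odot>\<^bsub>M\<^esub> g ((\<phi> ^^ t) w0) \<oplus>\<^bsub>M\<^esub> g u"
        using cu EndD[OF gE] tM uM by simp
      moreover have "g ((\<phi> ^^ t) w0) = ?w" unfolding gpow using tl by simp
      moreover have "g u = \<zero>\<^bsub>M\<^esub>"
      proof -
        have "g ` Gs (Suc t) \<subseteq> {\<zero>\<^bsub>M\<^esub>}"
        proof
          fix y assume "y \<in> g ` Gs (Suc t)"
          then obtain k where k: "Suc t \<le> k" "y = g ((\<phi> ^^ k) w0)" unfolding Gs_def by blast
          then show "y \<in> {\<zero>\<^bsub>M\<^esub>}" unfolding gpow using pow_big[OF w0] tl by simp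
        qed
        then have "lspan R M (g ` Gs (Suc t)) = {\<zero>\<^bsub>M\<^esub>}" using lspan_zeros by blast
        then show ?thesis using End_image_lspan[OF gE Gs_carrier] cu(2) by blast
      qed
      ultimately have "c \<odot>\<^bsub>M\<^esub> ?w = \<zero>\<^bsub>M\<^esub>" using cu wM by simp
      then have "c \<in> jacobson R" using nonJ_inj[OF cu(1) wM] w0nz by blast
      then show False using False by blast
    qed
  qed
qed

lemma not_in: "(\<phi> ^^ (n - 1)) w0 \<notin> lspan R M (Gs 0)"
  using not_in_aux by blast

lemma keyJ:
  assumes r: "r \<in> carrier R" and rw: "r \<odot>\<^bsub>M\<^esub> (\<phi> ^^ (n - 1)) w0 \<in> lspan R M (Gs 0)"
  shows "r \<in> jacobson R"
proof (rule ccontr)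
  assume "r \<notin> jacobson R"
  then obtain s where s: "s \<in> carrier R" "\<And>x. x \<in> carrier M \<Longrightarrow> s \<odot>\<^bsub>M\<^esub> (r \<odot>\<^bsub>M\<^esub> x) = x"
    using inv_sm[OF r] by blast
  have wM: "(\<phi> ^^ (n - 1)) w0 \<in> carrier M" using pow_closed w0 by blast
  have "s \<odot>\<^bsub>M\<^esub> (r \<odot>\<^bsub>M\<^esub> (\<phi> ^^ (n - 1)) w0) \<in> lspan R M (Gs 0)"
    using lsubD(5)[OF lspan_lsub[OF Gs_carrier] s(1) rw] .
  then show False using s(2)[OF wM] not_in by simp
qed

end

context nilpw begin

lemma theta_ex:
  assumes x: "x \<in> carrier M"
  shows "\<exists>\<theta>\<in>End R M. (\<forall>k<n - 1. \<theta> ((\<phi> ^^ k) w0) = \<zero>\<^bsub>M\<^esub>) \<and> \<theta> ((\<phi> ^^ (n - 1)) w0) = x \<and>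
            (\<forall>z\<in>carrier M. \<exists>r\<in>carrier R. \<theta> z = r \<odot>\<^bsub>M\<^esub> x)"
proof -
  define w where "w = (\<phi> ^^ (n - 1)) w0"
  have wM: "w \<in> carrier M" unfolding w_def using pow_closed w0 by blast
  define N where "N = lspan R M (Gs 0)"
  have Nsub: "lsubmodule R M N" unfolding N_def using lspan_lsub[OF Gs_carrier] .
  have NM: "N \<subseteq> carrier M" using lsubD(1)[OF Nsub] .
  have iS: "insert w (Gs 0) \<subseteq> carrier M" using wM Gs_carrier by blast
  define Q where "Q = lspan R M (insert w (Gs 0))"
  have Qsub: "lsubmodule R M Q" unfolding Q_def using lspan_lsub[OF iS] .
  have Qeq: "Q = {c \<odot>\<^bsub>M\<^esub> w \<oplus>\<^bsub>M\<^esub> u | c u. c \<in> carrier R \<and> u \<in> N}"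
    unfolding Q_def N_def using lspan_insert[OF Gs_carrier wM] .
  have wQ: "w \<in> Q" unfolding Q_def using lspan_incl by blast
  have NQ: "N \<subseteq> Q" unfolding Q_def N_def using lspan_mono[OF iS] by blast
  have "\<exists>Q'. lsubmodule R M Q' \<and> Q \<inter> Q' = {\<zero>\<^bsub>M\<^esub>} \<and>
           (\<forall>x\<in>carrier M. \<exists>u\<in>Q. \<exists>v\<in>Q'. x = u \<oplus>\<^bsub>M\<^esub> v)"
    using ss Qsub unfolding semisimple_def by simp
  then obtain Q' where Q': "lsubmodule R M Q'" "Q \<inter> Q' = {\<zero>\<^bsub>M\<^esub>}"
    and dec0: "\<forall>x\<in>carrier M. \<exists>u\<in>Q. \<exists>v\<in>Q'. x = u \<oplus>\<^bsub>M\<^esub> v" by blast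
  have Q'M: "Q' \<subseteq> carrier M" using lsubD(1)[OF Q'(1)] .
  define rep where "rep z c \<longleftrightarrow> c \<in> carrier R \<and> (\<exists>u\<in>N. \<exists>q\<in>Q'. z = (c \<odot>\<^bsub>M\<^esub> w \<oplus>\<^bsub>M\<^esub> u) \<oplus>\<^bsub>M\<^esub> q)" for z c
  have R1: "\<exists>c. rep z c" if z: "z \<in> carrier M" for z
  proof -
    obtain q0 q where q: "q0 \<in> Q" "q \<in> Q'" "z = q0 \<oplus>\<^bsub>M\<^esub> q" using dec0 z by blast
    obtain c u where cu: "c \<in> carrier R" "u \<in> N" "q0 = c \<odot>\<^bsub>M\<^esub> w \<oplus>\<^bsub>M\<^esub> u"
      using q(1) unfolding Qeq by blast
    show ?thesis unfolding rep_def using q cu by blast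
  qed
  have R2: "c \<odot>\<^bsub>M\<^esub> x = c' \<odot>\<^bsub>M\<^esub> x" if r1: "rep z c" and r2: "rep z c'" for z c c'
  proof -
    obtain u q where uq: "c \<in> carrier R" "u \<in> N" "q \<in> Q'" "z = (c \<odot>\<^bsub>M\<^esub> w \<oplus>\<^bsub>M\<^esub> u) \<oplus>\<^bsub>M\<^esub> q"
      using r1 unfolding rep_def by blast
    obtain u' q' where uq': "c' \<in> carrier R" "u' \<in> N" "q' \<in> Q'" "z = (c' \<odot>\<^bsub>M\<^esub> w \<oplus>\<^bsub>M\<^esub> u') \<oplus>\<^bsub>M\<^esub> q'"
      using r2 unfolding rep_def by blast
    have cM: "u \<in> carrier M" "u' \<in> carrier M" "q \<in> carrier M" "q' \<in> carrier M"
      using uq uq' NM Q'M by auto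
    have AQ: "c \<odot>\<^bsub>M\<^esub> w \<oplus>\<^bsub>M\<^esub> u \<in> Q" "c' \<odot>\<^bsub>M\<^esub> w \<oplus>\<^bsub>M\<^esub> u' \<in> Q"
      using lsubD(3)[OF Qsub lsubD(5)[OF Qsub uq(1) wQ]] lsubD(3)[OF Qsub lsubD(5)[OF Qsub uq'(1) wQ]]
        uq(2) uq'(2) NQ by auto
    have AM: "c \<odot>\<^bsub>M\<^esub> w \<oplus>\<^bsub>M\<^esub> u \<in> carrier M" "c' \<odot>\<^bsub>M\<^esub> w \<oplus>\<^bsub>M\<^esub> u' \<in> carrier M"
      using uq uq' cM wM by auto
    have e: "(c \<odot>\<^bsub>M\<^esub> w \<oplus>\<^bsub>M\<^esub> u) \<oplus>\<^bsub>M\<^esub> \<ominus>\<^bsub>M\<^esub> (c' \<odot>\<^bsub>M\<^esub> w \<oplus>\<^bsub>M\<^esub> u') = q' \<oplus>\<^bsub>M\<^esub> \<ominus>\<^bsub>M\<^esub> q"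
      using ag_move[OF AM(1) cM(3) AM(2) cM(4)] uq(4) uq'(4) by simp
    have i1: "(c \<odot>\<^bsub>M\<^esub> w \<oplus>\<^bsub>M\<^esub> u) \<oplus>\<^bsub>M\<^esub> \<ominus>\<^bsub>M\<^esub> (c' \<odot>\<^bsub>M\<^esub> w \<oplus>\<^bsub>M\<^esub> u') \<in> Q"
      using lsubD(3)[OF Qsub AQ(1) lsubD(4)[OF Qsub AQ(2)]] .
    have i2: "q' \<oplus>\<^bsub>M\<^esub> \<ominus>\<^bsub>M\<^esub> q \<in> Q'"
      using lsubD(3)[OF Q'(1) uq'(3) lsubD(4)[OF Q'(1) uq(3)]] .
    have "(c \<odot>\<^bsub>M\<^esub> w \<oplus>\<^bsub>M\<^esub> u) \<oplus>\<^bsub>M\<^esub> \<ominus>\<^bsub>M\<^esub> (c' \<odot>\<^bsub>M\<^esub> w \<oplus>\<^bsub>M\<^esub> u') \<in> Q \<inter> Q'"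
      using i1 i2 unfolding e by (rule IntI)
    then have "(c \<odot>\<^bsub>M\<^esub> w \<oplus>\<^bsub>M\<^esub> u) \<oplus>\<^bsub>M\<^esub> \<ominus>\<^bsub>M\<^esub> (c' \<odot>\<^bsub>M\<^esub> w \<oplus>\<^bsub>M\<^esub> u') = \<zero>\<^bsub>M\<^esub>"
      unfolding Q'(2) by (rule singletonD)
    then have AA: "c \<odot>\<^bsub>M\<^esub> w \<oplus>\<^bsub>M\<^esub> u = c' \<odot>\<^bsub>M\<^esub> w \<oplus>\<^bsub>M\<^esub> u'"
      using ag_sub_eq[OF AM] by blast
    have cwM: "c \<odot>\<^bsub>M\<^esub> w \<in> carrier M" "c' \<odot>\<^bsub>M\<^esub> w \<in> carrier M" using uq uq' wM by auto
    have e2: "c \<odot>\<^bsub>M\<^esub> w \<oplus>\<^bsub>M\<^esub> \<ominus>\<^bsub>M\<^esub> (c' \<odot>\<^bsub>M\<^esub> w) = u' \<oplus>\<^bsub>M\<^esub> \<ominus>\<^bsub>M\<^esub> u"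
      using ag_move[OF cwM(1) cM(1) cwM(2) cM(2) AA] .
    have "(c \<ominus>\<^bsub>R\<^esub> c') \<odot>\<^bsub>M\<^esub> w = c \<odot>\<^bsub>M\<^esub> w \<oplus>\<^bsub>M\<^esub> \<ominus>\<^bsub>M\<^esub> (c' \<odot>\<^bsub>M\<^esub> w)"
      using uq(1) uq'(1) wM by (simp add: R.minus_eq sm_ldistr sm_uminus)
    also have "\<dots> \<in> N" unfolding e2 using lsubD(3)[OF Nsub uq'(2) lsubD(4)[OF Nsub uq(2)]] .
    finally have "(c \<ominus>\<^bsub>R\<^esub> c') \<odot>\<^bsub>M\<^esub> w \<in> N" .
    then have "c \<ominus>\<^bsub>R\<^esub> c' \<in> jacobson R" using keyJ uq(1) uq'(1) unfolding N_def w_def by simp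
    then have z0: "(c \<ominus>\<^bsub>R\<^esub> c') \<odot>\<^bsub>M\<^esub> x = \<zero>\<^bsub>M\<^esub>" using ann x by blast
    have "(c \<ominus>\<^bsub>R\<^esub> c') \<odot>\<^bsub>M\<^esub> x = c \<odot>\<^bsub>M\<^esub> x \<oplus>\<^bsub>M\<^esub> \<ominus>\<^bsub>M\<^esub> (c' \<odot>\<^bsub>M\<^esub> x)"
      using uq(1) uq'(1) x by (simp add: R.minus_eq sm_ldistr sm_uminus)
    then show ?thesis using z0 ag_sub_eq uq(1) uq'(1) x by simp
  qed
  have R3: "rep (z1 \<oplus>\<^bsub>M\<^esub> z2) (c1 \<oplus>\<^bsub>R\<^esub> c2)" if r1: "rep z1 c1" and r2: "rep z2 c2" for z1 z2 c1 c2
  proof -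
    obtain u q where uq: "c1 \<in> carrier R" "u \<in> N" "q \<in> Q'" "z1 = (c1 \<odot>\<^bsub>M\<^esub> w \<oplus>\<^bsub>M\<^esub> u) \<oplus>\<^bsub>M\<^esub> q"
      using r1 unfolding rep_def by blast
    obtain u' q' where uq': "c2 \<in> carrier R" "u' \<in> N" "q' \<in> Q'" "z2 = (c2 \<odot>\<^bsub>M\<^esub> w \<oplus>\<^bsub>M\<^esub> u') \<oplus>\<^bsub>M\<^esub> q'"
      using r2 unfolding rep_def by blast
    have cM: "u \<in> carrier M" "u' \<in> carrier M" "q \<in> carrier M" "q' \<in> carrier M"
      using uq uq' NM Q'M by auto
    have "z1 \<oplus>\<^bsub>M\<^esub> z2 = ((c1 \<oplus>\<^bsub>R\<^esub> c2) \<odot>\<^bsub>M\<^esub> w \<oplus>\<^bsub>M\<^esub> (u \<oplus>\<^bsub>M\<^esub> u')) \<oplus>\<^bsub>M\<^esub> (q \<oplus>\<^bsub>M\<^esub> q')"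
      using uq uq' cM wM by (simp add: sm_ldistr M.a_ac)
    moreover have "u \<oplus>\<^bsub>M\<^esub> u' \<in> N" using lsubD(3)[OF Nsub uq(2) uq'(2)] .
    moreover have "q \<oplus>\<^bsub>M\<^esub> q' \<in> Q'" using lsubD(3)[OF Q'(1) uq(3) uq'(3)] .
    moreover have "c1 \<oplus>\<^bsub>R\<^esub> c2 \<in> carrier R" using uq uq' by simp
    ultimately show ?thesis unfolding rep_def by blast
  qed
  have R4: "rep (a \<odot>\<^bsub>M\<^esub> z) (a \<otimes>\<^bsub>R\<^esub> c)" if r1: "rep z c" and a: "a \<in> carrier R" for z c a
  proof -
    obtain u q where uq: "c \<in> carrier R" "u \<in> N" "q \<in> Q'" "z = (c \<odot>\<^bsub>M\<^esub> w \<oplus>\<^bsub>M\<^esub> u) \<oplus>\<^bsub>M\<^esub> q"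
      using r1 unfolding rep_def by blast
    have cM: "u \<in> carrier M" "q \<in> carrier M" using uq NM Q'M by auto
    have "a \<odot>\<^bsub>M\<^esub> z = ((a \<otimes>\<^bsub>R\<^esub> c) \<odot>\<^bsub>M\<^esub> w \<oplus>\<^bsub>M\<^esub> a \<odot>\<^bsub>M\<^esub> u) \<oplus>\<^bsub>M\<^esub> a \<odot>\<^bsub>M\<^esub> q"
      using uq cM wM a by (simp add: sm_rdistr sm_assoc)
    moreover have "a \<odot>\<^bsub>M\<^esub> u \<in> N" using lsubD(5)[OF Nsub a uq(2)] .
    moreover have "a \<odot>\<^bsub>M\<^esub> q \<in> Q'" using lsubD(5)[OF Q'(1) a uq(3)] .
    moreover have "a \<otimes>\<^bsub>R\<^esub> c \<in> carrier R" using uq a by simp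
    ultimately show ?thesis unfolding rep_def by blast
  qed
  define \<theta> where "\<theta> z = (SOME c. rep z c) \<odot>\<^bsub>M\<^esub> x" for z
  have th: "\<theta> z = c \<odot>\<^bsub>M\<^esub> x" if r: "rep z c" for z c
  proof -
    have "rep z (SOME c. rep z c)" using r by (rule someI)
    then show ?thesis unfolding \<theta>_def using R2 r by blast
  qed
  have repC: "c \<in> carrier R" if "rep z c" for z c using that unfolding rep_def by blast
  have thE: "\<theta> \<in> End R M" unfolding End_def
  proof (intro CollectI conjI ballI)
    show "\<theta> \<in> carrier M \<rightarrow> carrier M"
    proof
      fix z assume z: "z \<in> carrier M"
      obtain c where c: "rep z c" using R1[OF z] by blast
      show "\<theta> z \<in> carrier M" using th[OF c] repC[OF c] x by simp
    qed
    show "\<theta> (z1 \<oplus>\<^bsub>M\<^esub> z2) = \<theta> z1 \<oplus>\<^bsub>M\<^esub> \<theta> z2" if z: "z1 \<in> carrier M" "z2 \<in> carrier M" for z1 z2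
    proof -
      obtain c1 where c1: "rep z1 c1" using R1[OF z(1)] by blast
      obtain c2 where c2: "rep z2 c2" using R1[OF z(2)] by blast
      show ?thesis using th[OF R3[OF c1 c2]] th[OF c1] th[OF c2] repC[OF c1] repC[OF c2] x
        by (simp add: sm_ldistr)
    qed
    show "\<theta> (a \<odot>\<^bsub>M\<^esub> z) = a \<odot>\<^bsub>M\<^esub> \<theta> z" if az: "a \<in> carrier R" "z \<in> carrier M" for a z
    proof -
      obtain c where c: "rep z c" using R1[OF az(2)] by blast
      show ?thesis using th[OF R4[OF c az(1)]] th[OF c] repC[OF c] x az by (simp add: sm_assoc)
    qed
  qed
  have th1: "\<theta> ((\<phi> ^^ k) w0) = \<zero>\<^bsub>M\<^esub>" if k: "k < n - 1" for k
  proof -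
    have "(\<phi> ^^ k) w0 \<in> Gs 0" unfolding Gs_def using k by (intro CollectI exI[of _ k]) simp
    then have g: "(\<phi> ^^ k) w0 \<in> N" unfolding N_def using lspan_incl by blast
    have gM: "(\<phi> ^^ k) w0 \<in> carrier M" using pow_closed w0 by blast
    have "(\<phi> ^^ k) w0 = (\<zero>\<^bsub>R\<^esub> \<odot>\<^bsub>M\<^esub> w \<oplus>\<^bsub>M\<^esub> (\<phi> ^^ k) w0) \<oplus>\<^bsub>M\<^esub> \<zero>\<^bsub>M\<^esub>" using wM gM by simp
    then have "rep ((\<phi> ^^ k) w0) \<zero>\<^bsub>R\<^esub>" unfolding rep_def using g lsubD(2)[OF Q'(1)] R.zero_closed by blast
    then show ?thesis using th x by simp
  qed
  have th2: "\<theta> w = x"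
  proof -
    have "w = (\<one>\<^bsub>R\<^esub> \<odot>\<^bsub>M\<^esub> w \<oplus>\<^bsub>M\<^esub> \<zero>\<^bsub>M\<^esub>) \<oplus>\<^bsub>M\<^esub> \<zero>\<^bsub>M\<^esub>" using wM by simp
    then have "rep w \<one>\<^bsub>R\<^esub>" unfolding rep_def using lsubD(2)[OF Nsub] lsubD(2)[OF Q'(1)] R.one_closed by blast
    then show ?thesis using th x by simp
  qed
  have th3: "\<exists>r\<in>carrier R. \<theta> z = r \<odot>\<^bsub>M\<^esub> x" if z: "z \<in> carrier M" for z
  proof -
    obtain c where c: "rep z c" using R1[OF z] by blast
    then show ?thesis using th[OF c] repC[OF c] by blast
  qed
  show ?thesis using thE th1 th2 th3 unfolding w_def by blast
qed

end

context nilp begin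

definition psi where "psi \<theta> z = (\<Oplus>\<^bsub>M\<^esub>i\<in>{..n - 1}. (\<phi> ^^ i) (\<theta> ((\<phi> ^^ (n - 1 - i)) z)))"

lemma psi_term_closed: "\<theta> \<in> End R M \<Longrightarrow> z \<in> carrier M \<Longrightarrow> (\<phi> ^^ i) (\<theta> ((\<phi> ^^ j) z)) \<in> carrier M"
  using pow_closed EndD(1) by blast

lemma psi_End: assumes th: "\<theta> \<in> End R M" shows "psi \<theta> \<in> End R M"
  unfolding End_def
proof (intro CollectI conjI ballI)
  show "psi \<theta> \<in> carrier M \<rightarrow> carrier M"
    unfolding psi_def using psi_term_closed[OF th] by (auto intro!: M.finsum_closed)
  show "psi \<theta> (x \<oplus>\<^bsub>M\<^esub> y) = psi \<theta> x \<oplus>\<^bsub>M\<^esub> psi \<theta> y" if xy: "x \<in> carrier M" "y \<in> carrier M" for x y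
  proof -
    have "psi \<theta> (x \<oplus>\<^bsub>M\<^esub> y) = (\<Oplus>\<^bsub>M\<^esub>i\<in>{..n - 1}. (\<phi> ^^ i) (\<theta> ((\<phi> ^^ (n - 1 - i)) x)) \<oplus>\<^bsub>M\<^esub> (\<phi> ^^ i) (\<theta> ((\<phi> ^^ (n - 1 - i)) y)))"
      unfolding psi_def
    proof (rule M.finsum_cong')
      show "{..n - 1} = {..n - 1}" ..
      show "(\<lambda>i. (\<phi> ^^ i) (\<theta> ((\<phi> ^^ (n - 1 - i)) x)) \<oplus>\<^bsub>M\<^esub> (\<phi> ^^ i) (\<theta> ((\<phi> ^^ (n - 1 - i)) y))) \<in> {..n - 1} \<rightarrow> carrier M"
        using psi_term_closed[OF th] xy by auto
      show "(\<phi> ^^ i) (\<theta> ((\<phi> ^^ (n - 1 - i)) (x \<oplus>\<^bsub>M\<^esub> y))) = (\<phi> ^^ i) (\<theta> ((\<phi> ^^ (n - 1 - i)) x)) \<oplus>\<^bsub>M\<^esub> (\<phi> ^^ i) (\<theta> ((\<phi> ^^ (n - 1 - i)) y))" for i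
        using EndD(2)[OF powE] EndD(2)[OF th] EndD(1)[OF th] pow_closed xy by simp
    qed
    also have "\<dots> = psi \<theta> x \<oplus>\<^bsub>M\<^esub> psi \<theta> y"
      unfolding psi_def using psi_term_closed[OF th] xy by (intro M.finsum_addf) auto
    finally show ?thesis .
  qed
  show "psi \<theta> (a \<odot>\<^bsub>M\<^esub> x) = a \<odot>\<^bsub>M\<^esub> psi \<theta> x" if ax: "a \<in> carrier R" "x \<in> carrier M" for a x
  proof -
    have "psi \<theta> (a \<odot>\<^bsub>M\<^esub> x) = (\<Oplus>\<^bsub>M\<^esub>i\<in>{..n - 1}. a \<odot>\<^bsub>M\<^esub> (\<phi> ^^ i) (\<theta> ((\<phi> ^^ (n - 1 - i)) x)))"
      unfolding psi_def
    proof (rule M.finsum_cong')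
      show "{..n - 1} = {..n - 1}" ..
      show "(\<lambda>i. a \<odot>\<^bsub>M\<^esub> (\<phi> ^^ i) (\<theta> ((\<phi> ^^ (n - 1 - i)) x))) \<in> {..n - 1} \<rightarrow> carrier M"
        using psi_term_closed[OF th] ax by auto
      show "(\<phi> ^^ i) (\<theta> ((\<phi> ^^ (n - 1 - i)) (a \<odot>\<^bsub>M\<^esub> x))) = a \<odot>\<^bsub>M\<^esub> (\<phi> ^^ i) (\<theta> ((\<phi> ^^ (n - 1 - i)) x))" for i
        using EndD(3)[OF powE] EndD(3)[OF th] EndD(1)[OF th] pow_closed ax by simp
    qed
    also have "\<dots> = a \<odot>\<^bsub>M\<^esub> psi \<theta> x"
      unfolding psi_def using psi_term_closed[OF th] ax by (intro sm_finsum[symmetric]) auto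
    finally show ?thesis .
  qed
qed

lemma psi_comm:
  assumes th: "\<theta> \<in> End R M" and z: "z \<in> carrier M"
  shows "psi \<theta> (\<phi> z) = \<phi> (psi \<theta> z)"
proof -
  obtain m where nm: "n = Suc m" using n_pos by (cases n) auto
  have phiz: "\<phi> z \<in> carrier M" using EndD(1)[OF phiE z] .
  have th0: "\<theta> \<zero>\<^bsub>M\<^esub> = \<zero>\<^bsub>M\<^esub>" using End_zero[OF th] .
  have pS: "\<phi> ((\<phi> ^^ k) x) = (\<phi> ^^ Suc k) x" for k x by simp
  have pS2: "(\<phi> ^^ k) (\<phi> x) = (\<phi> ^^ Suc k) x" for k x by (simp add: funpow_swap1)
  have rhs: "\<phi> (psi \<theta> z) = (\<Oplus>\<^bsub>M\<^esub>i\<in>{..m}. (\<phi> ^^ Suc i) (\<theta> ((\<phi> ^^ (m - i)) z)))"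
  proof -
    have "\<phi> (psi \<theta> z) = (\<Oplus>\<^bsub>M\<^esub>i\<in>{..m}. \<phi> ((\<phi> ^^ i) (\<theta> ((\<phi> ^^ (m - i)) z))))"
      unfolding psi_def using nm End_finsum[OF phiE, of "{..m}" "\<lambda>i. (\<phi> ^^ i) (\<theta> ((\<phi> ^^ (m - i)) z))"]
        psi_term_closed[OF th z] by (simp add: Pi_def)
    then show ?thesis by simp
  qed
  have lhs: "psi \<theta> (\<phi> z) = (\<Oplus>\<^bsub>M\<^esub>i\<in>{..m}. (\<phi> ^^ i) (\<theta> ((\<phi> ^^ Suc (m - i)) z)))"
    unfolding psi_def using nm by (simp add: pS2)
  show ?thesis
  proof (cases m)
    case 0
    have "(\<phi> ^^ Suc 0) z = \<zero>\<^bsub>M\<^esub>" using pow_big[OF z, of "Suc 0"] nm 0 by simp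
    moreover have "(\<phi> ^^ Suc 0) (\<theta> z) = \<zero>\<^bsub>M\<^esub>" using pow_big[OF EndD(1)[OF th z], of "Suc 0"] nm 0 by simp
    ultimately show ?thesis unfolding lhs rhs 0 using th0 by simp
  next
    case (Suc k)
    have f: "(\<lambda>i. (\<phi> ^^ i) (\<theta> ((\<phi> ^^ Suc (m - i)) z))) \<in> {..Suc k} \<rightarrow> carrier M"
      using psi_term_closed[OF th z] by (intro Pi_I) blast
    have g: "(\<lambda>i. (\<phi> ^^ Suc i) (\<theta> ((\<phi> ^^ (m - i)) z))) \<in> {..Suc k} \<rightarrow> carrier M"
      using psi_term_closed[OF th z] by (intro Pi_I) blast
    have SC: "(\<Oplus>\<^bsub>M\<^esub>i\<in>{..k}. (\<phi> ^^ Suc i) (\<theta> ((\<phi> ^^ (m - i)) z))) \<in> carrier M"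
      by (rule M.finsum_closed) (use psi_term_closed[OF th z] in \<open>intro Pi_I, blast\<close>)
    have "psi \<theta> (\<phi> z) = (\<Oplus>\<^bsub>M\<^esub>i\<in>{..k}. (\<phi> ^^ Suc i) (\<theta> ((\<phi> ^^ Suc (m - Suc i)) z))) \<oplus>\<^bsub>M\<^esub> \<theta> ((\<phi> ^^ Suc m) z)"
      unfolding lhs Suc using M.finsum_Suc2[OF f[unfolded Suc]] Suc by simp
    also have "\<theta> ((\<phi> ^^ Suc m) z) = \<zero>\<^bsub>M\<^esub>" using pow_big[OF z, of "Suc m"] nm th0 by simp
    also have "(\<Oplus>\<^bsub>M\<^esub>i\<in>{..k}. (\<phi> ^^ Suc i) (\<theta> ((\<phi> ^^ Suc (m - Suc i)) z))) =
               (\<Oplus>\<^bsub>M\<^esub>i\<in>{..k}. (\<phi> ^^ Suc i) (\<theta> ((\<phi> ^^ (m - i)) z)))"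
    proof (rule M.finsum_cong')
      show "{..k} = {..k}" ..
      show "(\<lambda>i. (\<phi> ^^ Suc i) (\<theta> ((\<phi> ^^ (m - i)) z))) \<in> {..k} \<rightarrow> carrier M"
        using psi_term_closed[OF th z] by (intro Pi_I) blast
      show "(\<phi> ^^ Suc i) (\<theta> ((\<phi> ^^ Suc (m - Suc i)) z)) = (\<phi> ^^ Suc i) (\<theta> ((\<phi> ^^ (m - i)) z))" if "i \<in> {..k}" for i
        using that Suc by (simp add: Suc_diff_Suc Suc_diff_le)
    qed
    finally have L: "psi \<theta> (\<phi> z) = (\<Oplus>\<^bsub>M\<^esub>i\<in>{..k}. (\<phi> ^^ Suc i) (\<theta> ((\<phi> ^^ (m - i)) z)))"
      using SC by simp
    have "\<phi> (psi \<theta> z) = (\<phi> ^^ Suc (Suc k)) (\<theta> ((\<phi> ^^ (m - Suc k)) z)) \<oplus>\<^bsub>M\<^esub> (\<Oplus>\<^bsub>M\<^esub>i\<in>{..k}. (\<phi> ^^ Suc i) (\<theta> ((\<phi> ^^ (m - i)) z)))"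
      unfolding rhs Suc using M.finsum_Suc[OF g[unfolded Suc]] Suc by simp
    also have "(\<phi> ^^ Suc (Suc k)) (\<theta> ((\<phi> ^^ (m - Suc k)) z)) = \<zero>\<^bsub>M\<^esub>"
      using pow_big[OF EndD(1)[OF th z], of "Suc (Suc k)"] nm Suc by simp
    finally show ?thesis using L SC by simp
  qed
qed

end

context nilpw begin

lemma psi_w0:
  assumes th: "\<theta> \<in> End R M" and t1: "\<And>k. k < n - 1 \<Longrightarrow> \<theta> ((\<phi> ^^ k) w0) = \<zero>\<^bsub>M\<^esub>"
    and t2: "\<theta> ((\<phi> ^^ (n - 1)) w0) = x"
  shows "psi \<theta> w0 = x"
proof -
  obtain m where nm: "n = Suc m" using n_pos by (cases n) auto
  have xM: "x \<in> carrier M" using t2 psi_term_closed[OF th w0, of 0 "n - 1"] by simp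
  show ?thesis
  proof (cases m)
    case 0
    then show ?thesis unfolding psi_def using t2 nm xM M.finsum_0[of "\<lambda>i. (\<phi> ^^ i) x"] by (simp add: Pi_def)
  next
    case (Suc k)
    have f: "(\<lambda>i. (\<phi> ^^ i) (\<theta> ((\<phi> ^^ (m - i)) w0))) \<in> {..Suc k} \<rightarrow> carrier M"
      using psi_term_closed[OF th w0] by (intro Pi_I) blast
    have "psi \<theta> w0 = (\<Oplus>\<^bsub>M\<^esub>i\<in>{..k}. (\<phi> ^^ Suc i) (\<theta> ((\<phi> ^^ (m - Suc i)) w0))) \<oplus>\<^bsub>M\<^esub> \<theta> ((\<phi> ^^ m) w0)"
      unfolding psi_def using nm Suc M.finsum_Suc2[OF f[unfolded Suc]] Suc by simp
    also have "(\<Oplus>\<^bsub>M\<^esub>i\<in>{..k}. (\<phi> ^^ Suc i) (\<theta> ((\<phi> ^^ (m - Suc i)) w0))) = (\<Oplus>\<^bsub>M\<^esub>i\<in>{..k}. \<zero>\<^bsub>M\<^esub>)"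
    proof (rule M.finsum_cong')
      show "{..k} = {..k}" ..
      show "(\<lambda>i. \<zero>\<^bsub>M\<^esub>) \<in> {..k} \<rightarrow> carrier M" by auto
      show "(\<phi> ^^ Suc i) (\<theta> ((\<phi> ^^ (m - Suc i)) w0)) = \<zero>\<^bsub>M\<^esub>" if "i \<in> {..k}" for i
        using t1[of "m - Suc i"] nm Suc that End_zero[OF powE] End_zero[OF phiE] by simp
    qed
    finally show ?thesis using t2 nm xM by simp
  qed
qed

end

context nilpw begin

lemma sigma_poly:
  assumes sE: "\<sigma> \<in> End R M" and C: "centralizer R M \<phi> \<subseteq> centralizer R M \<sigma>"
  shows "\<exists>b. (\<forall>i. b i \<in> carrier R) \<and>
     (\<forall>x\<in>carrier M. \<sigma> x = (\<Oplus>\<^bsub>M\<^esub>i\<in>{..n - 1}. b i \<odot>\<^bsub>M\<^esub> (\<phi> ^^ i) x))"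
proof -
  have centpsi: "psi \<theta> \<in> centralizer R M \<sigma>" if th: "\<theta> \<in> End R M" for \<theta>
  proof -
    have "psi \<theta> \<in> centralizer R M \<phi>" unfolding cent_iff using psi_End[OF th] psi_comm[OF th] by blast
    then show ?thesis using C by blast
  qed
  obtain \<theta>0 where th0: "\<theta>0 \<in> End R M" "\<And>k. k < n - 1 \<Longrightarrow> \<theta>0 ((\<phi> ^^ k) w0) = \<zero>\<^bsub>M\<^esub>"
    "\<theta>0 ((\<phi> ^^ (n - 1)) w0) = w0" "\<And>z. z \<in> carrier M \<Longrightarrow> \<exists>r\<in>carrier R. \<theta>0 z = r \<odot>\<^bsub>M\<^esub> w0"
    using theta_ex[OF w0] by blast
  have pw: "psi \<theta>0 w0 = w0" using psi_w0[OF th0(1) th0(2) th0(3)] by blast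
  have sw: "\<sigma> w0 \<in> carrier M" using EndD(1)[OF sE w0] .
  define b where "b i = (SOME r. r \<in> carrier R \<and> \<theta>0 ((\<phi> ^^ (n - 1 - i)) (\<sigma> w0)) = r \<odot>\<^bsub>M\<^esub> w0)" for i
  have b: "b i \<in> carrier R \<and> \<theta>0 ((\<phi> ^^ (n - 1 - i)) (\<sigma> w0)) = b i \<odot>\<^bsub>M\<^esub> w0" for i
  proof -
    have "\<exists>r. r \<in> carrier R \<and> \<theta>0 ((\<phi> ^^ (n - 1 - i)) (\<sigma> w0)) = r \<odot>\<^bsub>M\<^esub> w0"
      using th0(4)[OF pow_closed[OF sw]] by blast
    then show ?thesis unfolding b_def by (rule someI_ex)
  qed
  have bR: "b i \<in> carrier R" for i using b by blast
  have sw0: "\<sigma> w0 = (\<Oplus>\<^bsub>M\<^esub>i\<in>{..n - 1}. b i \<odot>\<^bsub>M\<^esub> (\<phi> ^^ i) w0)"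
  proof -
    have "\<sigma> w0 = \<sigma> (psi \<theta>0 w0)" using pw by simp
    also have "\<dots> = psi \<theta>0 (\<sigma> w0)" using centpsi[OF th0(1)] w0 unfolding cent_iff by simp
    also have "\<dots> = (\<Oplus>\<^bsub>M\<^esub>i\<in>{..n - 1}. b i \<odot>\<^bsub>M\<^esub> (\<phi> ^^ i) w0)"
      unfolding psi_def
    proof (rule M.finsum_cong')
      show "{..n - 1} = {..n - 1}" ..
      show "(\<lambda>i. b i \<odot>\<^bsub>M\<^esub> (\<phi> ^^ i) w0) \<in> {..n - 1} \<rightarrow> carrier M"
        using bR pow_closed[OF w0] by auto
      show "(\<phi> ^^ i) (\<theta>0 ((\<phi> ^^ (n - 1 - i)) (\<sigma> w0))) = b i \<odot>\<^bsub>M\<^esub> (\<phi> ^^ i) w0" for i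
        using b[of i] EndD(3)[OF powE bR w0] by simp
    qed
    finally show ?thesis .
  qed
  have "\<sigma> x = (\<Oplus>\<^bsub>M\<^esub>i\<in>{..n - 1}. b i \<odot>\<^bsub>M\<^esub> (\<phi> ^^ i) x)" if x: "x \<in> carrier M" for x
  proof -
    obtain \<theta> where th: "\<theta> \<in> End R M" "\<And>k. k < n - 1 \<Longrightarrow> \<theta> ((\<phi> ^^ k) w0) = \<zero>\<^bsub>M\<^esub>"
      "\<theta> ((\<phi> ^^ (n - 1)) w0) = x"
      using theta_ex[OF x] by blast
    have px: "psi \<theta> w0 = x" using psi_w0[OF th(1) th(2) th(3)] by blast
    have pE: "psi \<theta> \<in> End R M" using psi_End[OF th(1)] .
    have pc: "\<And>z. z \<in> carrier M \<Longrightarrow> psi \<theta> (\<phi> z) = \<phi> (psi \<theta> z)" using psi_comm[OF th(1)] by blast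
    have "\<sigma> x = \<sigma> (psi \<theta> w0)" using px by simp
    also have "\<dots> = psi \<theta> (\<sigma> w0)" using centpsi[OF th(1)] w0 unfolding cent_iff by simp
    also have "\<dots> = psi \<theta> (\<Oplus>\<^bsub>M\<^esub>i\<in>{..n - 1}. b i \<odot>\<^bsub>M\<^esub> (\<phi> ^^ i) w0)" using sw0 by simp
    also have "\<dots> = (\<Oplus>\<^bsub>M\<^esub>i\<in>{..n - 1}. b i \<odot>\<^bsub>M\<^esub> (\<phi> ^^ i) (psi \<theta> w0))"
      using comm_sum[OF pE phiE pc, of "{..n - 1}" b w0 "\<lambda>i. i"] bR w0 by simp
    finally show ?thesis using px by simp
  qed
  then show ?thesis using bR by blast
qed

end

theorem theorem4p10:
  fixes R :: "('a, 'c) ring_scheme"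
    and M :: "('a, 'b, 'd) module_scheme"
    and \<phi> \<sigma> :: "'b \<Rightarrow> 'b" and n d :: nat
  assumes "local_ring R"
    and "left_module R M"
    and "finitely_generated R M"
    and "semisimple R M"
    and "d = comp_length R M"
    and "\<phi> \<in> End R M"
    and "nilpotent_index M \<phi> n"
    and "\<sigma> \<in> End R M"
  shows "centralizer R M \<phi> \<subseteq> centralizer R M \<sigma> \<longleftrightarrow>
    (\<exists>y :: nat \<Rightarrow> 'b. \<exists>a :: nat \<Rightarrow> 'a.
       generates R M (y ` {1..d}) \<and> (\<forall>i\<in>{1..n}. a i \<in> carrier R) \<and>
       (\<forall>j\<in>{1..d}. \<forall>\<psi>\<in>centralizer R M \<phi>.
          (\<Oplus>\<^bsub>M\<^esub>i\<in>{1..n}. a i \<odot>\<^bsub>M\<^esub> (\<phi> ^^ (i - 1)) (\<psi> (y j))) = \<sigma> (\<psi> (y j))))"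
proof -
  interpret S: setting R M
    using assms(1,2,4) unfolding setting_def setting_axioms_def lmod_def by blast
  interpret NP: nilp R M \<phi> n
    using assms(6,7) S.setting_axioms unfolding nilp_def nilp_axioms_def by blast
  obtain w0 where w0: "w0 \<in> carrier M" "(\<phi> ^^ (n - 1)) w0 \<noteq> \<zero>\<^bsub>M\<^esub>" using NP.w0_ex by blast
  interpret NW: nilpw R M \<phi> n w0
    using NP.nilp_axioms w0 unfolding nilpw_def nilpw_axioms_def by blast
  obtain m where nm: "n = Suc m" using NP.n_pos by (cases n) auto
  have reidx: "(\<Oplus>\<^bsub>M\<^esub>i\<in>{1..n}. a i \<odot>\<^bsub>M\<^esub> (\<phi> ^^ (i - 1)) v) = (\<Oplus>\<^bsub>M\<^esub>i\<in>{..n - 1}. a (Suc i) \<odot>\<^bsub>M\<^esub> (\<phi> ^^ i) v)"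
    if aR: "\<forall>i\<in>{1..n}. a i \<in> carrier R" and v: "v \<in> carrier M" for a v
  proof -
    have e: "{1..n} = Suc ` {..n - 1}" using nm by (simp add: atMost_atLeast0 image_Suc_atLeastAtMost)
    have "(\<Oplus>\<^bsub>M\<^esub>i\<in>Suc ` {..n - 1}. a i \<odot>\<^bsub>M\<^esub> (\<phi> ^^ (i - 1)) v) = (\<Oplus>\<^bsub>M\<^esub>i\<in>{..n - 1}. a (Suc i) \<odot>\<^bsub>M\<^esub> (\<phi> ^^ (Suc i - 1)) v)"
      by (rule S.M.finsum_reindex) (use aR e NP.pow_closed[OF v] in auto)
    then show ?thesis unfolding e by simp
  qed
  show ?thesis
  proof
    assume C: "centralizer R M \<phi> \<subseteq> centralizer R M \<sigma>"
    obtain b where b: "\<And>i. b i \<in> carrier R" "\<And>x. x \<in> carrier M \<Longrightarrow> \<sigma> x = (\<Oplus>\<^bsub>M\<^esub>i\<in>{..n - 1}. b i \<odot>\<^bsub>M\<^esub> (\<phi> ^^ i) x)"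
      using NW.sigma_poly[OF assms(8) C] by blast
    obtain y where y: "generates R M (y ` {1..comp_length R M})" using S.gen_set[OF assms(3)] by blast
    have yM: "y j \<in> carrier M" if "j \<in> {1..d}" for j using y that assms(5) unfolding generates_def by blast
    define a where "a i = b (i - 1)" for i
    have aR: "\<forall>i\<in>{1..n}. a i \<in> carrier R" unfolding a_def using b(1) by blast
    have "(\<Oplus>\<^bsub>M\<^esub>i\<in>{1..n}. a i \<odot>\<^bsub>M\<^esub> (\<phi> ^^ (i - 1)) (\<psi> (y j))) = \<sigma> (\<psi> (y j))"
      if j: "j \<in> {1..d}" and psi: "\<psi> \<in> centralizer R M \<phi>" for j \<psi>
    proof -
      have v: "\<psi> (y j) \<in> carrier M" using psi yM[OF j] S.EndD(1) unfolding S.cent_iff by blast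
      show ?thesis unfolding reidx[OF aR v] using b(2)[OF v] unfolding a_def by simp
    qed
    then show "\<exists>y a. generates R M (y ` {1..d}) \<and> (\<forall>i\<in>{1..n}. a i \<in> carrier R) \<and>
       (\<forall>j\<in>{1..d}. \<forall>\<psi>\<in>centralizer R M \<phi>.
          (\<Oplus>\<^bsub>M\<^esub>i\<in>{1..n}. a i \<odot>\<^bsub>M\<^esub> (\<phi> ^^ (i - 1)) (\<psi> (y j))) = \<sigma> (\<psi> (y j)))"
      using y aR assms(5) by blast
  next
    assume "\<exists>y a. generates R M (y ` {1..d}) \<and> (\<forall>i\<in>{1..n}. a i \<in> carrier R) \<and>
       (\<forall>j\<in>{1..d}. \<forall>\<psi>\<in>centralizer R M \<phi>.
          (\<Oplus>\<^bsub>M\<^esub>i\<in>{1..n}. a i \<odot>\<^bsub>M\<^esub> (\<phi> ^^ (i - 1)) (\<psi> (y j))) = \<sigma> (\<psi> (y j)))"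
    then obtain y a where y: "generates R M (y ` {1..d})" and aR: "\<forall>i\<in>{1..n}. a i \<in> carrier R"
      and eq: "\<And>j \<psi>. j \<in> {1..d} \<Longrightarrow> \<psi> \<in> centralizer R M \<phi> \<Longrightarrow>
          (\<Oplus>\<^bsub>M\<^esub>i\<in>{1..n}. a i \<odot>\<^bsub>M\<^esub> (\<phi> ^^ (i - 1)) (\<psi> (y j))) = \<sigma> (\<psi> (y j))"
      by blast
    have yS: "y ` {1..d} \<subseteq> carrier M" "lspan R M (y ` {1..d}) = carrier M" using y unfolding generates_def by auto
    have idC: "(\<lambda>x. x) \<in> centralizer R M \<phi>" unfolding S.cent_iff using S.End_id by simp
    have sy: "\<sigma> (y j) = (\<Oplus>\<^bsub>M\<^esub>i\<in>{1..n}. a i \<odot>\<^bsub>M\<^esub> (\<phi> ^^ (i - 1)) (y j))" if j: "j \<in> {1..d}" for j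
      using eq[OF j idC] by simp
    show "centralizer R M \<phi> \<subseteq> centralizer R M \<sigma>"
    proof
      fix \<psi> assume psi: "\<psi> \<in> centralizer R M \<phi>"
      have pE: "\<psi> \<in> End R M" and pc: "\<And>z. z \<in> carrier M \<Longrightarrow> \<psi> (\<phi> z) = \<phi> (\<psi> z)"
        using psi unfolding S.cent_iff by auto
      have "\<psi> (\<sigma> x) = \<sigma> (\<psi> x)" if x: "x \<in> carrier M" for x
      proof (rule S.End_agree[OF S.End_comp[OF pE assms(8)] S.End_comp[OF assms(8) pE] yS(1) yS(2) _ x])
        fix s assume "s \<in> y ` {1..d}"
        then obtain j where j: "j \<in> {1..d}" "s = y j" by blast
        have yj: "y j \<in> carrier M" using yS j by blast
        have "\<psi> (\<sigma> (y j)) = \<psi> (\<Oplus>\<^bsub>M\<^esub>i\<in>{1..n}. a i \<odot>\<^bsub>M\<^esub> (\<phi> ^^ (i - 1)) (y j))" using sy[OF j(1)] by simp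
        also have "\<dots> = (\<Oplus>\<^bsub>M\<^esub>i\<in>{1..n}. a i \<odot>\<^bsub>M\<^esub> (\<phi> ^^ (i - 1)) (\<psi> (y j)))"
          using S.comm_sum[OF pE assms(6) pc, of "{1..n}" a "y j" "\<lambda>i. i - 1"] aR yj by simp
        also have "\<dots> = \<sigma> (\<psi> (y j))" using eq[OF j(1) psi] .
        finally show "\<psi> (\<sigma> s) = \<sigma> (\<psi> s)" using j by simp
      qed
      then show "\<psi> \<in> centralizer R M \<sigma>" unfolding S.cent_iff using pE by blast
    qed
  qed
qed


end
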